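(* Consider the $(1,\lambda)$-CSA-ES without cumulation ($c=1$), with $d_\sigma>0$, applied to $f(x)=[x]_1$ on $\mathbb{R}^n$. If $\lambda\ge3$, the step-size diverges geometrically almost surely and in expectation: almost surely $$\frac1t\ln\Big(\frac{\sigma_t}{\sigma_0}\Big)\xrightarrow[t\to\infty]{}\mathbb{E}\Big(\ln\Big(\frac{\sigma_{t+1}}{\sigma_t}\Big)\Big)=\frac{1}{2d_\sigma n}\big(\mathbb{E}(\mathcal{N}_{1:\lambda}^2)-1\big),$$ and this rate is strictly positive. If $\lambda=1$ or $\lambda=2$, then $\ln\sigma_{t+1}=\ln\sigma_t+W_t$ where $\mathbb{E}(W_t)=0$ (an additive unbiased random walk on $\ln\sigma_t$); more precisely $W_t$ is distributed as $\frac{1}{2d_\sigma}(\chi^2_n/n-1)$ for $\lambda=1$, and as $\frac{1}{2d_\sigma}\big((\mathcal{N}_{1:2}^2+\chi^2_{n-1})/n-1\big)$ for $\lambda=2$ (with $\mathcal{N}_{1:2}$ and $\chi^2_{n-1}$ independent), where $\chi^2_k$ denotes a chi-squared random variable with $k$ degrees of freedom.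
   Context: For $x\in\mathbb{R}^n$, $[x]_i$ denotes its $i$-th coordinate. The $(1,\lambda)$-CSA-ES with parameters $\lambda\ge1$, $0<c\le1$, $d_\sigma>0$, minimizing $f:\mathbb{R}^n\to\mathbb{R}$, is defined as follows. Start from $X_0\in\mathbb{R}^n$, $\sigma_0>0$, and $p_0\sim\mathcal{N}(0,I_n)$. At iteration $t$, draw $\xi_{t,1},\ldots,\xi_{t,\lambda}$ i.i.d. $\sim\mathcal{N}(0,I_n)$, independent of everything before; the children are $Y_{t,i}=X_t+\sigma_t\xi_{t,i}$. The next parent $X_{t+1}$ is the child with the smallest $f$-value, and $\xi^\star_t$ denotes the corresponding $\xi_{t,i}$, so that $X_{t+1}=X_t+\sigma_t\xi^\star_t$. The cumulative path is $p_{t+1}=(1-c)p_t+\sqrt{c(2-c)}\,\xi^\star_t$, and the step-size is updated as $\sigma_{t+1}=\sigma_t\exp\!\big(\tfrac{c}{2d_\sigma}(\|p_{t+1}\|^2/n-1)\big)$. For i.i.d. standard normal $\mathcal{N}_1,\ldots,\mathcal{N}_\lambda$, $\mathcal{N}_{1:\lambda}$ denotes their minimum. *)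

theory Defs
  imports "HOL-Probability.Probability"
begin

text \<open>A vector of R^n is represented as a function nat => real, of which
only the coordinates 0, ..., n-1 are meaningful; the paper's first coordinate [x]_1
is coordinate 0.  The lambda children of iteration t are indexed by i = 0, ..., lambda-1.
The noise of the algorithm is given as a realisation
  xi t i j  = j-th coordinate of xi_{t,i}.\<close>

definition std_normal_measure :: "real measure" where
  "std_normal_measure = density lborel (\<lambda>x. ennreal (std_normal_density x))"

definition std_normal_prod :: "nat \<Rightarrow> (nat \<Rightarrow> real) measure" where
  "std_normal_prod k = PiM {..<k} (\<lambda>_. std_normal_measure)"

definition E_min_normal_sq :: "nat \<Rightarrow> real" where
  "E_min_normal_sq lam =
     (\<integral>x. (Min ((\<lambda>i. x i) ` {..<lam}))\<^sup>2 \<partial>(std_normal_prod lam))"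

text \<open>The selected child is the one
with smallest f-value; ties (a null event) are broken by smallest index.\<close>
fun csa_es ::
  "nat \<Rightarrow> nat \<Rightarrow> real \<Rightarrow> real \<Rightarrow> ((nat \<Rightarrow> real) \<Rightarrow> real) \<Rightarrow>
   (nat \<Rightarrow> real) \<Rightarrow> real \<Rightarrow> (nat \<Rightarrow> real) \<Rightarrow> (nat \<Rightarrow> nat \<Rightarrow> nat \<Rightarrow> real) \<Rightarrow>
   nat \<Rightarrow> (nat \<Rightarrow> real) \<times> real \<times> (nat \<Rightarrow> real)" where
  "csa_es n lam c d f X0 s0 p0 xi 0 = (X0, s0, p0)"
| "csa_es n lam c d f X0 s0 p0 xi (Suc t) =
     (case csa_es n lam c d f X0 s0 p0 xi t of (X, s, p) \<Rightarrow>
       (let Y = (\<lambda>i j. X j + s * xi t i j);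
            k = (LEAST i. i < lam \<and> (\<forall>l<lam. f (Y i) \<le> f (Y l)));
            p' = (\<lambda>j. (1 - c) * p j + sqrt (c * (2 - c)) * xi t k j);
            s' = s * exp (c / (2 * d) * ((\<Sum>j<n. (p' j)\<^sup>2) / real n - 1))
        in (Y k, s', p')))"

definition csa_sigma ::
  "nat \<Rightarrow> nat \<Rightarrow> real \<Rightarrow> real \<Rightarrow> ((nat \<Rightarrow> real) \<Rightarrow> real) \<Rightarrow>
   (nat \<Rightarrow> real) \<Rightarrow> real \<Rightarrow> (nat \<Rightarrow> 'a \<Rightarrow> real) \<Rightarrow> (nat \<Rightarrow> nat \<Rightarrow> nat \<Rightarrow> 'a \<Rightarrow> real) \<Rightarrow>
   nat \<Rightarrow> 'a \<Rightarrow> real" where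
  "csa_sigma n lam c d f X0 s0 p0 xi t w =
     fst (snd (csa_es n lam c d f X0 s0 (\<lambda>j. p0 j w) (\<lambda>t i j. xi t i j w) t))"

text \<open>The whole noise family: Inl j is the j-th coordinate of p_0,
Inr (t,i,j) the j-th coordinate of xi_{t,i}.\<close>
definition noise_family ::
  "(nat \<Rightarrow> 'a \<Rightarrow> real) \<Rightarrow> (nat \<Rightarrow> nat \<Rightarrow> nat \<Rightarrow> 'a \<Rightarrow> real) \<Rightarrow>
   nat + (nat \<times> nat \<times> nat) \<Rightarrow> 'a \<Rightarrow> real" where
  "noise_family p0 xi k = (case k of Inl j \<Rightarrow> p0 j | Inr (t, i, j) \<Rightarrow> xi t i j)"

definition noise_index :: "nat \<Rightarrow> nat \<Rightarrow> (nat + (nat \<times> nat \<times> nat)) set" where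
  "noise_index n lam = Inl ` {..<n} \<union> Inr ` {(t, i, j). i < lam \<and> j < n}"

end

theory Submission
  imports Defs
begin

context prob_space begin

lemma indep_sets_reindex:
  assumes "indep_sets F I" "inj_on \<phi> K" "\<phi> ` K \<subseteq> I"
  shows "indep_sets (\<lambda>k. F (\<phi> k)) K"
proof (rule indep_setsI)
  fix k assume "k \<in> K" then show "F (\<phi> k) \<subseteq> events"
    using assms unfolding indep_sets_def by auto
next
  fix A J assume J: "J \<noteq> {}" "J \<subseteq> K" "finite J" and A: "\<forall>j\<in>J. A j \<in> F (\<phi> j)"
  define B where "B = (\<lambda>i. A (inv_into J \<phi> i))"
  have inj: "inj_on \<phi> J" using assms(2) J(2) inj_on_subset by blast
  have eqs: "\<And>j. j \<in> J \<Longrightarrow> B (\<phi> j) = A j" unfolding B_def using inj by simp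
  have "prob (\<Inter>i\<in>\<phi>`J. B i) = (\<Prod>i\<in>\<phi>`J. prob (B i))"
  proof (rule indep_setsD[OF assms(1)])
    show "\<phi> ` J \<subseteq> I" using J(2) assms(3) by blast
    show "\<phi> ` J \<noteq> {}" using J(1) by blast
    show "finite (\<phi> ` J)" using J(3) by blast
    show "\<forall>j\<in>\<phi> ` J. B j \<in> F j" using A eqs by force
  qed
  moreover have "(\<Inter>i\<in>\<phi>`J. B i) = (\<Inter>j\<in>J. A j)" using eqs by auto
  moreover have "(\<Prod>i\<in>\<phi>`J. prob (B i)) = (\<Prod>j\<in>J. prob (A j))"
    using eqs by (simp add: prod.reindex[OF inj])
  ultimately show "prob (\<Inter>j\<in>J. A j) = (\<Prod>j\<in>J. prob (A j))" by simp
qed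

lemma indep_vars_reindex:
  assumes "indep_vars M' X I" "inj_on \<phi> K" "\<phi> ` K \<subseteq> I"
  shows "indep_vars (\<lambda>k. M' (\<phi> k)) (\<lambda>k. X (\<phi> k)) K"
  using assms indep_sets_reindex[where F="\<lambda>i. {X i -` A \<inter> space M |A. A \<in> sets (M' i)}" and I=I and \<phi>=\<phi> and K=K]
  unfolding indep_vars_def2 by blast

lemma distr_std_normal:
  assumes "distributed M lborel X (\<lambda>x. ennreal (std_normal_density x))"
  shows "distr M borel X = std_normal_measure"
proof -
  have m: "X \<in> borel_measurable M" using assms by (auto simp: distributed_def)
  have "distr M borel X = distr M lborel X"
    by (rule measure_eqI) (simp_all add: emeasure_distr m)
  also have "\<dots> = std_normal_measure" using assms
    by (simp add: distributed_def std_normal_measure_def)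
  finally show ?thesis .
qed

lemma law_PiM_std:
  assumes "finite K" "K \<noteq> {}" "indep_vars (\<lambda>_. borel) Z K"
    and "\<And>k. k \<in> K \<Longrightarrow> distributed M lborel (Z k) (\<lambda>x. ennreal (std_normal_density x))"
  shows "distr M (PiM K (\<lambda>_. borel)) (\<lambda>w. \<lambda>k\<in>K. Z k w) = PiM K (\<lambda>_. std_normal_measure)"
proof -
  have rv: "\<And>k. k \<in> K \<Longrightarrow> random_variable borel (Z k)"
    using assms(4) by (auto simp: distributed_def)
  have "distr M (PiM K (\<lambda>_. borel)) (\<lambda>w. \<lambda>k\<in>K. Z k w) = PiM K (\<lambda>k. distr M borel (Z k))"
    using indep_vars_iff_distr_eq_PiM'[OF assms(2) rv] assms(3) by simp
  also have "\<dots> = PiM K (\<lambda>_. std_normal_measure)"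
    by (rule PiM_cong) (simp_all add: distr_std_normal assms(4))
  finally show ?thesis .
qed

end

lemma prob_space_std_normal: "prob_space std_normal_measure"
  unfolding std_normal_measure_def
  using prob_space_normal_density[of 1 0] by simp


definition selv :: "nat \<Rightarrow> (nat \<Rightarrow> real) \<Rightarrow> nat" where
  "selv lam v = (LEAST i. i < lam \<and> (\<forall>l<lam. v i \<le> v l))"

lemma selv_ex:
  fixes lam :: nat and v :: "nat \<Rightarrow> real"
  assumes "lam \<ge> 1" shows "\<exists>i. i < lam \<and> (\<forall>l<lam. v i \<le> v l)"
proof -
  have "0 \<in> {..<lam}" using assms by auto
  then have fin: "finite (v ` {..<lam})" "v ` {..<lam} \<noteq> {}" by auto
  obtain i where "i < lam" "v i = Min (v ` {..<lam})"
    using Min_in[OF fin] by auto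
  then show ?thesis using fin by (metis Min_le image_eqI lessThan_iff)
qed

lemma selv_prop:
  assumes "lam \<ge> 1"
  shows "selv lam v < lam" "\<And>l. l < lam \<Longrightarrow> v (selv lam v) \<le> v l"
  using LeastI_ex[OF selv_ex[OF assms, of v]] unfolding selv_def by auto

lemma selv_Min:
  assumes "lam \<ge> 1"
  shows "v (selv lam v) = Min (v ` {..<lam})"
proof -
  have "0 \<in> {..<lam}" using assms by auto
  then have fin: "finite (v ` {..<lam})" "v ` {..<lam} \<noteq> {}" by auto
  show ?thesis
    by (rule antisym) (use selv_prop[OF assms] fin in \<open>auto intro!: Min.boundedI Min_le\<close>)
qed

lemma selv_eq_iff:
  assumes "lam \<ge> 1"
  shows "selv lam v = i \<longleftrightarrow> i < lam \<and> (\<forall>l<lam. v i \<le> v l) \<and> (\<forall>l<i. v i < v l)"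
proof
  assume s: "selv lam v = i"
  have "\<forall>l<i. v i < v l"
  proof (intro allI impI)
    fix l assume "l < i"
    then have "\<not> (l < lam \<and> (\<forall>m<lam. v l \<le> v m))"
      using not_less_Least[of l "\<lambda>i. i < lam \<and> (\<forall>l<lam. v i \<le> v l)"] s unfolding selv_def by auto
    moreover have "l < lam" using \<open>l < i\<close> s selv_prop(1)[OF assms, where v=v] by linarith
    ultimately obtain m where "m < lam" "v m < v l" by (auto simp: not_le)
    then show "v i < v l" using selv_prop(2)[OF assms, where l=m and v=v] s by auto
  qed
  then show "i < lam \<and> (\<forall>l<lam. v i \<le> v l) \<and> (\<forall>l<i. v i < v l)"
    using selv_prop[OF assms, where v=v] s by auto
next
  assume h: "i < lam \<and> (\<forall>l<lam. v i \<le> v l) \<and> (\<forall>l<i. v i < v l)"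
  show "selv lam v = i" unfolding selv_def
  proof (rule Least_equality)
    show "i < lam \<and> (\<forall>l<lam. v i \<le> v l)" using h by auto
    fix y assume y: "y < lam \<and> (\<forall>l<lam. v y \<le> v l)"
    show "i \<le> y"
    proof (rule ccontr)
      assume "\<not> i \<le> y" then have "v i < v y" using h by auto
      moreover have "v y \<le> v i" using y h by auto
      ultimately show False by simp
    qed
  qed
qed

definition Gf :: "nat \<Rightarrow> nat \<Rightarrow> real \<Rightarrow> (nat \<Rightarrow> nat \<Rightarrow> real) \<Rightarrow> real" where
  "Gf n lam d z = 1 / (2 * d) * ((\<Sum>j<n. (z (selv lam (\<lambda>i. z i 0)) j)\<^sup>2) / real n - 1)"

lemma csa_step:
  assumes "s0 > 0" "lam \<ge> 1"
  shows "fst (snd (csa_es n lam 1 d (\<lambda>x. x 0) X0 s0 p xi t)) > 0 \<and>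
         fst (snd (csa_es n lam 1 d (\<lambda>x. x 0) X0 s0 p xi (Suc t))) =
         fst (snd (csa_es n lam 1 d (\<lambda>x. x 0) X0 s0 p xi t)) * exp (Gf n lam d (xi t))"
proof (induction t)
  case 0
  have *: "\<And>s i l. s > 0 \<Longrightarrow> (X0 0 + s * xi 0 i 0 \<le> X0 0 + s * xi 0 l 0) = (xi 0 i 0 \<le> xi 0 l 0)"
    by simp
  show ?case using assms
    by (simp add: Let_def Gf_def selv_def *)
next
  case (Suc t)
  obtain X s q where e: "csa_es n lam 1 d (\<lambda>x. x 0) X0 s0 p xi (Suc t) = (X, s, q)"
    by (metis prod_cases3)
  have spos: "s > 0" using Suc e by (auto simp: Let_def split: prod.splits intro!: mult_pos_pos)
  have *: "\<And>i l. (X 0 + s * xi (Suc t) i 0 \<le> X 0 + s * xi (Suc t) l 0) = (xi (Suc t) i 0 \<le> xi (Suc t) l 0)"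
    using spos by simp
  show ?case using spos
    by (simp only: csa_es.simps(2)[of _ _ _ _ _ _ _ _ _ "Suc t"] e) (simp add: Let_def Gf_def selv_def *)
qed


lemma selv_measurable:
  fixes v :: "'b \<Rightarrow> nat \<Rightarrow> real"
  assumes "lam \<ge> 1" and m: "\<And>i. i < lam \<Longrightarrow> (\<lambda>u. v u i) \<in> borel_measurable N"
  shows "(\<lambda>u. selv lam (v u)) \<in> measurable N (count_space {..<lam})"
  unfolding measurable_count_space_eq2_countable
proof (intro conjI ballI Pi_I)
  fix u show "selv lam (v u) \<in> {..<lam}" using selv_prop[OF assms(1)] by auto
next
  fix a assume a: "a \<in> {..<lam}"
  have "(\<lambda>u. selv lam (v u)) -` {a} \<inter> space N =
      {u \<in> space N. (\<forall>l\<in>{..<lam}. v u a \<le> v u l) \<and> (\<forall>l\<in>{..<a}. v u a < v u l)}"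
    using a selv_eq_iff[OF assms(1)] by auto
  also have "\<dots> \<in> sets N"
  proof -
    have ma: "(\<lambda>u. v u a) \<in> borel_measurable N" using a m by auto
    have "\<And>l. l \<in> {..<lam} \<Longrightarrow> {u \<in> space N. v u a \<le> v u l} \<in> sets N"
      using ma m by measurable
    moreover have "\<And>l. l \<in> {..<a} \<Longrightarrow> {u \<in> space N. v u a < v u l} \<in> sets N"
      using ma m a by (intro measurable) auto
    ultimately show ?thesis
      by (intro sets.sets_Collect_conj sets.sets_Collect_finite_All) auto
  qed
  finally show "(\<lambda>u. selv lam (v u)) -` {a} \<inter> space N \<in> sets N" .
qed

lemma Gf_measurable:
  fixes z :: "'b \<Rightarrow> nat \<Rightarrow> nat \<Rightarrow> real"
  assumes "lam \<ge> 1" "n \<ge> 1" and m: "\<And>i j. i < lam \<Longrightarrow> j < n \<Longrightarrow> (\<lambda>u. z u i j) \<in> borel_measurable N"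
  shows "(\<lambda>u. Gf n lam d (z u)) \<in> borel_measurable N"
proof -
  have s: "(\<lambda>u. selv lam (\<lambda>i. z u i 0)) \<in> measurable N (count_space {..<lam})"
    by (rule selv_measurable[OF assms(1)]) (use m assms(2) in auto)
  show ?thesis
    unfolding Gf_def
    by (rule measurable_compose_countable'[OF _ s, where f="\<lambda>i u. 1 / (2 * d) * ((\<Sum>j<n. (z u i j)\<^sup>2) / real n - 1)"])
       (use m in auto)
qed


lemma selv_cong:
  assumes "\<And>i. i < lam \<Longrightarrow> v i = v' i"
  shows "selv lam v = selv lam v'"
  unfolding selv_def
  by (rule arg_cong[where f=Least]) (use assms in \<open>auto simp: fun_eq_iff\<close>)

lemma Gf_cong:
  assumes "lam \<ge> 1" "n \<ge> 1" "\<And>i j. i < lam \<Longrightarrow> j < n \<Longrightarrow> z i j = z' i j"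
  shows "Gf n lam d z = Gf n lam d z'"
proof -
  have s: "selv lam (\<lambda>i. z i 0) = selv lam (\<lambda>i. z' i 0)"
    by (rule selv_cong) (use assms in auto)
  have "selv lam (\<lambda>i. z i 0) < lam" using selv_prop[OF assms(1)] by blast
  then show ?thesis unfolding Gf_def s using assms(3) s by (auto intro!: sum.cong)
qed

locale csa = prob_space M for M :: "'a measure" +
  fixes n lam :: nat and d :: real and p0 :: "nat \<Rightarrow> 'a \<Rightarrow> real"
    and xi :: "nat \<Rightarrow> nat \<Rightarrow> nat \<Rightarrow> 'a \<Rightarrow> real"
  assumes n1: "n \<ge> 1" and lam1: "lam \<ge> 1" and dpos: "d > 0"
    and ind: "indep_vars (\<lambda>_. borel) (noise_family p0 xi) (noise_index n lam)"
    and dist: "\<And>k. k \<in> noise_index n lam \<Longrightarrow>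
        distributed M lborel (noise_family p0 xi k) (\<lambda>x. ennreal (std_normal_density x))"
begin

lemma xi_dist: "i < lam \<Longrightarrow> j < n \<Longrightarrow>
    distributed M lborel (xi t i j) (\<lambda>x. ennreal (std_normal_density x))"
  using dist[of "Inr (t, i, j)"] by (simp add: noise_family_def noise_index_def)

lemma xi_meas: "i < lam \<Longrightarrow> j < n \<Longrightarrow> xi t i j \<in> borel_measurable M"
  using xi_dist by (simp add: distributed_def)

definition Wf :: "nat \<Rightarrow> 'a \<Rightarrow> real" where
  "Wf t w = Gf n lam d (\<lambda>i j. xi t i j w)"

lemma Wf_meas: "Wf t \<in> borel_measurable M"
  unfolding Wf_def[abs_def]
  by (rule Gf_measurable[OF lam1 n1]) (simp add: xi_meas)

definition blk :: "nat \<Rightarrow> (nat + nat \<times> nat \<times> nat) set" where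
  "blk t = Inr ` {(t', i, j). t' = t \<and> i < lam \<and> j < n}"

lemma Wf_indep: "indep_vars (\<lambda>_. borel) Wf UNIV"
proof -
  have I1: "indep_vars (\<lambda>t. PiM (blk t) (\<lambda>_. borel))
      (\<lambda>t w. restrict (\<lambda>k. noise_family p0 xi k w) (blk t)) UNIV"
  proof (rule indep_vars_restrict[OF ind])
    show "\<And>t. t \<in> UNIV \<Longrightarrow> blk t \<subseteq> noise_index n lam"
      by (auto simp: blk_def noise_index_def)
    show "disjoint_family_on blk UNIV"
      by (auto simp: blk_def disjoint_family_on_def)
  qed
  define F where "F t u = Gf n lam d (\<lambda>i j. if i < lam \<and> j < n then u (Inr (t, i, j)) else 0)"
    for t and u :: "nat + nat \<times> nat \<times> nat \<Rightarrow> real"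
  have Fm: "F t \<in> borel_measurable (PiM (blk t) (\<lambda>_. borel))" for t
    unfolding F_def[abs_def]
  proof (rule Gf_measurable[OF lam1 n1])
    fix i j assume "i < lam" "j < n"
    then have "Inr (t, i, j) \<in> blk t" by (auto simp: blk_def)
    then show "(\<lambda>u. if i < lam \<and> j < n then u (Inr (t, i, j)) else 0)
        \<in> borel_measurable (Pi\<^sub>M (blk t) (\<lambda>_. borel))"
      using \<open>i < lam\<close> \<open>j < n\<close> by simp
  qed
  have I2: "indep_vars (\<lambda>_. borel) (\<lambda>t w. F t (restrict (\<lambda>k. noise_family p0 xi k w) (blk t))) UNIV"
    by (rule indep_vars_compose2[OF I1 Fm])
  show ?thesis
  proof (rule indep_vars_cong[THEN iffD1, OF refl _ refl I2])
    fix t :: nat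
    show "(\<lambda>w. F t (restrict (\<lambda>k. noise_family p0 xi k w) (blk t))) = Wf t"
    proof
      fix w show "F t (restrict (\<lambda>k. noise_family p0 xi k w) (blk t)) = Wf t w"
        unfolding F_def Wf_def
        by (rule Gf_cong[OF lam1 n1]) (auto simp: blk_def noise_family_def)
    qed
  qed
qed

end

lemma (in prob_space) law_select:
  assumes I: "finite I" "I \<noteq> {}"
    and V: "\<And>i. i \<in> I \<Longrightarrow> V i \<in> measurable M N"
    and VP: "\<And>i. i \<in> I \<Longrightarrow> distr M N (V i) = P"
    and S: "S \<in> measurable N (count_space I)"
    and s: "\<And>w. w \<in> space M \<Longrightarrow> s w \<in> I"
    and SV: "\<And>w i. w \<in> space M \<Longrightarrow> i \<in> I \<Longrightarrow> S (V i w) = s w"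
    and Vsm: "Vs \<in> measurable M N"
    and Vs: "\<And>w. w \<in> space M \<Longrightarrow> Vs w = V (s w) w"
  shows "distr M N Vs = P"
proof -
  obtain i0 where i0: "i0 \<in> I" using I by auto
  have sP: "sets P = sets N" using VP[OF i0] by (metis sets_distr)
  show ?thesis
  proof (rule measure_eqI)
    show "sets (distr M N Vs) = sets P" using sP by simp
  next
    fix A assume "A \<in> sets (distr M N Vs)"
    then have A: "A \<in> sets N" by simp
    define B where "B i = A \<inter> (S -` {i} \<inter> space N)" for i
    have Bm: "B i \<in> sets N" if "i \<in> I" for i
    proof -
      have "S -` {i} \<inter> space N \<in> sets N"
        using measurable_sets[OF S, of "{i}"] that by simp
      then show ?thesis using A by (simp add: B_def sets.Int)
    qed
    have "emeasure (distr M N Vs) A = emeasure M (Vs -` A \<inter> space M)"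
      using A Vsm by (simp add: emeasure_distr)
    also have "Vs -` A \<inter> space M = (\<Union>i\<in>I. V i -` B i \<inter> space M)"
    proof (intro equalityI subsetI)
      fix w assume "w \<in> Vs -` A \<inter> space M"
      then have w: "w \<in> space M" "Vs w \<in> A" by auto
      have "V (s w) w \<in> space N" using V[OF s[OF w(1)]] w(1) by (auto simp: measurable_def)
      then show "w \<in> (\<Union>i\<in>I. V i -` B i \<inter> space M)"
        using w s[OF w(1)] SV[OF w(1) s[OF w(1)]] Vs[OF w(1)]
        by (auto simp: B_def intro!: bexI[of _ "s w"])
    next
      fix w assume "w \<in> (\<Union>i\<in>I. V i -` B i \<inter> space M)"
      then obtain i where "i \<in> I" "w \<in> space M" "V i w \<in> B i" by auto
      then show "w \<in> Vs -` A \<inter> space M" using SV Vs by (auto simp: B_def)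
    qed
    also have "emeasure M (\<Union>i\<in>I. V i -` B i \<inter> space M) = (\<Sum>i\<in>I. emeasure M (V i -` B i \<inter> space M))"
    proof (rule sum_emeasure[symmetric])
      show "(\<lambda>i. V i -` B i \<inter> space M) ` I \<subseteq> sets M"
        using V Bm by (auto intro!: measurable_sets)
      show "disjoint_family_on (\<lambda>i. V i -` B i \<inter> space M) I"
        unfolding disjoint_family_on_def using SV by (auto simp: B_def)
    qed (use I in auto)
    also have "\<dots> = (\<Sum>i\<in>I. emeasure P (B i))"
    proof (rule sum.cong[OF refl])
      fix i assume i: "i \<in> I"
      have "emeasure M (V i -` B i \<inter> space M) = emeasure (distr M N (V i)) (B i)"
        using V[OF i] Bm[OF i] by (simp add: emeasure_distr)
      then show "emeasure M (V i -` B i \<inter> space M) = emeasure P (B i)" using VP[OF i] by simp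
    qed
    also have "\<dots> = emeasure P (\<Union>i\<in>I. B i)"
    proof (rule sum_emeasure)
      show "B ` I \<subseteq> sets P" using Bm sP by auto
      show "disjoint_family_on B I" by (auto simp: disjoint_family_on_def B_def)
    qed (use I in auto)
    also have "(\<Union>i\<in>I. B i) = A"
    proof -
      have "\<And>x. x \<in> space N \<Longrightarrow> S x \<in> I" using S by (auto simp: measurable_def)
      then show ?thesis using sets.sets_into_space[OF A] by (auto simp: B_def)
    qed
    finally show "emeasure (distr M N Vs) A = emeasure P A" .
  qed
qed

context csa begin

definition KK :: "nat set" where "KK = {..<lam + n - 1}"

lemma lam_ne: "{..<lam} \<noteq> {}"
proof - have "0 \<in> {..<lam}" using lam1 by simp then show ?thesis by blast qed

lemma KK_ne: "KK \<noteq> {}"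
proof - have "0 \<in> KK" using lam1 n1 by (simp add: KK_def) then show ?thesis by blast qed

definition phi :: "nat \<Rightarrow> nat \<Rightarrow> nat \<Rightarrow> nat + nat \<times> nat \<times> nat" where
  "phi t i k = (if k < lam then Inr (t, k, 0) else Inr (t, i, k - lam + 1))"

definition Q :: "nat \<Rightarrow> nat \<Rightarrow> 'a \<Rightarrow> nat \<Rightarrow> real" where
  "Q t i w = (\<lambda>k\<in>KK. noise_family p0 xi (phi t i k) w)"

definition sel :: "nat \<Rightarrow> 'a \<Rightarrow> nat" where
  "sel t w = selv lam (\<lambda>i. xi t i 0 w)"

definition Qs :: "nat \<Rightarrow> 'a \<Rightarrow> nat \<Rightarrow> real" where
  "Qs t w = Q t (sel t w) w"

definition H :: "(nat \<Rightarrow> real) \<Rightarrow> real" where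
  "H x = 1 / (2 * d) * (((Min ((\<lambda>k. x k) ` {..<lam}))\<^sup>2 + (\<Sum>k\<in>{lam..<lam + n - 1}. (x k)\<^sup>2)) / real n - 1)"

lemma Q_law:
  assumes i: "i < lam"
  shows "distr M (PiM KK (\<lambda>_. borel)) (Q t i) = PiM KK (\<lambda>_. std_normal_measure)"
proof -
  have inj: "inj_on (phi t i) KK"
    by (auto simp: inj_on_def phi_def KK_def split: if_splits)
  have img: "phi t i ` KK \<subseteq> noise_index n lam"
    using i n1 by (auto simp: phi_def KK_def noise_index_def)
  show ?thesis using KK_ne
    unfolding Q_def
    by (intro law_PiM_std) (use indep_vars_reindex[OF ind inj img] img dist in \<open>auto simp: KK_def\<close>)
qed

lemma Q_meas: "i < lam \<Longrightarrow> Q t i \<in> measurable M (PiM KK (\<lambda>_. borel))"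
  unfolding Q_def
  by (intro measurable_restrict)
     (use n1 in \<open>auto simp: phi_def KK_def noise_family_def intro!: xi_meas\<close>)

lemma sel_lt: "sel t w < lam"
  using selv_prop(1)[OF lam1] by (simp add: sel_def)

lemma sel_meas: "sel t \<in> measurable M (count_space {..<lam})"
  unfolding sel_def[abs_def]
  by (rule selv_measurable[OF lam1]) (use n1 in \<open>auto intro!: xi_meas\<close>)

lemma Qs_meas: "Qs t \<in> measurable M (PiM KK (\<lambda>_. borel))"
  unfolding Qs_def[abs_def]
  by (rule measurable_compose_countable'[OF _ sel_meas]) (auto intro: Q_meas)

lemma Q_first: assumes "k < lam" shows "Q t i w k = xi t k 0 w"
proof -
  have "k < lam + n - 1" using n1 assms by linarith
  then show ?thesis using assms by (simp add: Q_def KK_def phi_def noise_family_def)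
qed

lemma Qs_law: "distr M (PiM KK (\<lambda>_. borel)) (Qs t) = PiM KK (\<lambda>_. std_normal_measure)"
proof (rule law_select[where I="{..<lam}" and V="Q t" and S="\<lambda>x. selv lam x" and s="sel t"])
  show "(\<lambda>x. selv lam x) \<in> measurable (PiM KK (\<lambda>_. borel)) (count_space {..<lam})"
    by (rule selv_measurable[OF lam1]) (use n1 in \<open>auto simp: KK_def intro!: measurable_PiM_component_rev\<close>)
  fix w i assume "i \<in> {..<lam}"
  then show "selv lam (Q t i w) = sel t w"
    unfolding sel_def by (intro selv_cong) (simp add: Q_first)
qed (use lam_ne in \<open>auto simp: Q_law Q_meas sel_lt Qs_meas Qs_def\<close>)

end

lemma std_normal_integrable_power: "integrable std_normal_measure (\<lambda>x. x ^ k)"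
  unfolding std_normal_measure_def
  by (subst integrable_density) (auto simp: integrable_std_normal_moment)

lemma std_normal_integral_sq: "(\<integral>x. x\<^sup>2 \<partial>std_normal_measure) = 1"
proof -
  have "(\<integral>x. x\<^sup>2 \<partial>std_normal_measure) = (\<integral>x. std_normal_density x * x ^ (2 * 1) \<partial>lborel)"
    unfolding std_normal_measure_def by (subst integral_density) auto
  also have "\<dots> = 1" by (subst integral_std_normal_moment_even) simp
  finally show ?thesis .
qed

context prob_space begin

lemma std_normal_power_integrable:
  assumes "distributed M lborel X (\<lambda>x. ennreal (std_normal_density x))"
  shows "integrable M (\<lambda>w. X w ^ k)"
proof -
  have m: "X \<in> borel_measurable M" using assms by (simp add: distributed_def)
  have "integrable (distr M borel X) (\<lambda>x. x ^ k)"
    using distr_std_normal[OF assms] std_normal_integrable_power by simp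
  then show ?thesis using m by (simp add: integrable_distr_eq)
qed

lemma std_normal_sq_expectation:
  assumes "distributed M lborel X (\<lambda>x. ennreal (std_normal_density x))"
  shows "expectation (\<lambda>w. (X w)\<^sup>2) = 1"
proof -
  have m: "X \<in> borel_measurable M" using assms by (simp add: distributed_def)
  have "expectation (\<lambda>w. (X w)\<^sup>2) = (\<integral>x. x\<^sup>2 \<partial>distr M borel X)"
    using m by (simp add: integral_distr)
  then show ?thesis using distr_std_normal[OF assms] std_normal_integral_sq by simp
qed

end

lemma sum_pow4_bound:
  fixes b :: "'i \<Rightarrow> real"
  assumes "finite K" "\<And>k. k \<in> K \<Longrightarrow> b k \<ge> 0"
  shows "(\<Sum>k\<in>K. b k) + 1 \<le> (real (card K) + 1) * Max (insert 1 (b ` K))"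
    and "(Max (insert 1 (b ` K))) ^ 4 \<le> 1 + (\<Sum>k\<in>K. (b k) ^ 4)"
proof -
  let ?m = "Max (insert 1 (b ` K))"
  have le: "\<And>k. k \<in> K \<Longrightarrow> b k \<le> ?m" "1 \<le> ?m" using assms(1) by auto
  have "(\<Sum>k\<in>K. b k) \<le> (\<Sum>k\<in>K. ?m)" by (rule sum_mono) (use le in auto)
  then show "(\<Sum>k\<in>K. b k) + 1 \<le> (real (card K) + 1) * ?m" using le(2) by (simp add: algebra_simps)
  have "?m \<in> insert 1 (b ` K)" using assms(1) by (intro Max_in) auto
  then consider "?m = 1" | k where "k \<in> K" "?m = b k" by auto
  then show "?m ^ 4 \<le> 1 + (\<Sum>k\<in>K. (b k) ^ 4)"
  proof cases
    case 1 then show ?thesis by (simp add: sum_nonneg)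
  next
    case 2
    have "b k ^ 4 \<le> (\<Sum>k\<in>K. (b k) ^ 4)"
      using 2 assms by (intro member_le_sum) auto
    then show ?thesis using 2 by simp
  qed
qed

lemma sum_pow4_bound':
  fixes b :: "'i \<Rightarrow> real"
  assumes "finite K" "\<And>k. k \<in> K \<Longrightarrow> b k \<ge> 0"
  shows "((\<Sum>k\<in>K. b k) + 1) ^ 4 \<le> (real (card K) + 1) ^ 4 * (1 + (\<Sum>k\<in>K. (b k) ^ 4))"
proof -
  let ?m = "Max (insert 1 (b ` K))"
  have "0 \<le> (\<Sum>k\<in>K. b k) + 1" using assms by (simp add: sum_nonneg add_nonneg_pos)
  then have "((\<Sum>k\<in>K. b k) + 1) ^ 4 \<le> ((real (card K) + 1) * ?m) ^ 4"
    by (intro power_mono sum_pow4_bound(1)[OF assms]) auto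
  also have "\<dots> = (real (card K) + 1) ^ 4 * ?m ^ 4" by (simp add: power_mult_distrib)
  also have "\<dots> \<le> (real (card K) + 1) ^ 4 * (1 + (\<Sum>k\<in>K. (b k) ^ 4))"
  proof (rule mult_left_mono)
    show "0 \<le> (real (card K) + 1) ^ 4" by (intro zero_le_power) simp
    show "?m ^ 4 \<le> 1 + (\<Sum>k\<in>K. (b k) ^ 4)" by (rule sum_pow4_bound(2)) (use assms in auto)
  qed
  finally show ?thesis .
qed

context csa begin

lemma Qs_tail: "k \<in> KK \<Longrightarrow> \<not> k < lam \<Longrightarrow> Qs t w k = xi t (sel t w) (k - lam + 1) w"
  by (simp add: Qs_def Q_def phi_def noise_family_def)

lemma Q_tail: "k \<in> KK \<Longrightarrow> \<not> k < lam \<Longrightarrow> Q t i w k = xi t i (k - lam + 1) w"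
  by (simp add: Q_def phi_def noise_family_def)

lemma sum_shift_tail:
  "(\<Sum>k\<in>{lam..<lam + n - 1}. f (k - lam + 1)) = (\<Sum>j\<in>{1..<n}. (f j :: real))"
  by (rule sum.reindex_bij_witness[of _ "\<lambda>j. j + lam - 1" "\<lambda>k. k - lam + 1"]) auto

lemma sum_split0: "(\<Sum>j<n. (f j :: real)) = f 0 + (\<Sum>j\<in>{1..<n}. f j)"
proof -
  have "{..<n} = insert 0 {1..<n}" using n1 by auto
  then show ?thesis by simp
qed

lemma H_formula:
  assumes "\<And>k. k < lam \<Longrightarrow> x k = v k" "\<And>j. j \<in> {1..<n} \<Longrightarrow> x (j + lam - 1) = u j"
  shows "H x = 1 / (2 * d) * (((Min (v ` {..<lam}))\<^sup>2 + (\<Sum>j\<in>{1..<n}. (u j)\<^sup>2)) / real n - 1)"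
proof -
  have "(\<lambda>k. x k) ` {..<lam} = v ` {..<lam}" using assms(1) by auto
  moreover have xa: "x a = u (a - lam + 1)" if "lam \<le> a" "a < lam + n - 1" for a
  proof -
    have "a - lam + 1 \<in> {1..<n}" "a - lam + 1 + lam - 1 = a" using that by auto
    then show ?thesis using assms(2) by metis
  qed
  moreover have "(\<Sum>k\<in>{lam..<lam + n - 1}. (x k)\<^sup>2) = (\<Sum>j\<in>{1..<n}. (u j)\<^sup>2)"
    by (rule sum.reindex_bij_witness[of _ "\<lambda>j. j + lam - 1" "\<lambda>k. k - lam + 1"])
       (use xa in auto)
  ultimately show ?thesis unfolding H_def by simp
qed

lemma Wf_H: "Wf t w = H (Qs t w)"
proof -
  let ?s = "sel t w"
  have "H (Qs t w) = 1 / (2 * d) * (((Min ((\<lambda>k. xi t k 0 w) ` {..<lam}))\<^sup>2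
      + (\<Sum>j\<in>{1..<n}. (xi t ?s j w)\<^sup>2)) / real n - 1)"
  proof (rule H_formula)
    show "\<And>k. k < lam \<Longrightarrow> Qs t w k = xi t k 0 w" by (simp add: Qs_def Q_first)
    fix j assume j: "j \<in> {1..<n}"
    then have "j + lam - 1 \<in> KK" "\<not> j + lam - 1 < lam" by (auto simp: KK_def)
    then show "Qs t w (j + lam - 1) = xi t ?s j w" using j by (simp add: Qs_tail)
  qed
  also have "Min ((\<lambda>k. xi t k 0 w) ` {..<lam}) = xi t ?s 0 w"
    using selv_Min[OF lam1, of "\<lambda>k. xi t k 0 w"] by (simp add: sel_def)
  finally show ?thesis
    unfolding Wf_def Gf_def sel_def[symmetric] by (simp add: sum_split0)
qed

lemma H_meas: "H \<in> borel_measurable (PiM KK (\<lambda>_. borel))"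
proof -
  have c: "\<And>k. k \<in> KK \<Longrightarrow> (\<lambda>x. x k) \<in> borel_measurable (PiM KK (\<lambda>_. borel))"
    by (rule measurable_PiM_component_rev) auto
  have "\<And>k. k < lam \<Longrightarrow> k \<in> KK" "\<And>k. k \<in> {lam..<lam + n - 1} \<Longrightarrow> k \<in> KK"
    using n1 by (auto simp: KK_def)
  then show ?thesis unfolding H_def[abs_def] using c by measurable
qed

lemma Wf_law: "distr M borel (Wf t) = distr (PiM KK (\<lambda>_. std_normal_measure)) borel H"
proof -
  have "Wf t = (\<lambda>w. H (Qs t w))" using Wf_H by auto
  then have "distr M borel (Wf t) = distr (distr M (PiM KK (\<lambda>_. borel)) (Qs t)) borel H"
    by (simp add: distr_distr[OF H_meas Qs_meas] comp_def)
  then show ?thesis by (simp add: Qs_law)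
qed

end

context csa begin

lemma Q0_dist: "k \<in> KK \<Longrightarrow> distributed M lborel (\<lambda>w. Q t 0 w k) (\<lambda>x. ennreal (std_normal_density x))"
proof -
  assume k: "k \<in> KK"
  have "phi t 0 k \<in> noise_index n lam" using k lam1 n1 by (auto simp: phi_def KK_def noise_index_def)
  moreover have "(\<lambda>w. Q t 0 w k) = noise_family p0 xi (phi t 0 k)" using k by (auto simp: Q_def)
  ultimately show ?thesis using dist by simp
qed

lemma Qs_Q0_integral:
  fixes g :: "(nat \<Rightarrow> real) \<Rightarrow> real"
  assumes g: "g \<in> borel_measurable (PiM KK (\<lambda>_. borel))"
  shows "(\<integral>w. g (Qs t w) \<partial>M) = (\<integral>w. g (Q t 0 w) \<partial>M)"
    and "integrable M (\<lambda>w. g (Qs t w)) \<longleftrightarrow> integrable M (\<lambda>w. g (Q t 0 w))"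
proof -
  have l0: "distr M (PiM KK (\<lambda>_. borel)) (Q t 0) = PiM KK (\<lambda>_. std_normal_measure)"
    using Q_law[of 0] lam1 by simp
  have m0: "Q t 0 \<in> measurable M (PiM KK (\<lambda>_. borel))" using Q_meas[of 0] lam1 by simp
  show "(\<integral>w. g (Qs t w) \<partial>M) = (\<integral>w. g (Q t 0 w) \<partial>M)"
    using integral_distr[OF Qs_meas g] integral_distr[OF m0 g] Qs_law l0 by simp
  show "integrable M (\<lambda>w. g (Qs t w)) \<longleftrightarrow> integrable M (\<lambda>w. g (Q t 0 w))"
    using integrable_distr_eq[OF Qs_meas g] integrable_distr_eq[OF m0 g] Qs_law l0 by simp
qed

lemma xi_sq_int: "i < lam \<Longrightarrow> j < n \<Longrightarrow> integrable M (\<lambda>w. (xi t i j w)\<^sup>2)"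
  using std_normal_power_integrable[OF xi_dist] by simp

lemma xi_sq_E: "i < lam \<Longrightarrow> j < n \<Longrightarrow> expectation (\<lambda>w. (xi t i j w)\<^sup>2) = 1"
  using std_normal_sq_expectation[OF xi_dist] by simp

definition mn :: "nat \<Rightarrow> 'a \<Rightarrow> real" where
  "mn t w = Min ((\<lambda>k. xi t k 0 w) ` {..<lam})"

lemma mn_meas: "mn t \<in> borel_measurable M"
  unfolding mn_def[abs_def] using n1 by (intro borel_measurable_Min) (auto intro: xi_meas)

lemma mn_sq_le: "(mn t w)\<^sup>2 \<le> (\<Sum>k<lam. (xi t k 0 w)\<^sup>2)"
proof -
  have "mn t w \<in> (\<lambda>k. xi t k 0 w) ` {..<lam}"
    unfolding mn_def using lam_ne by (intro Min_in) auto
  then obtain k where "k < lam" "mn t w = xi t k 0 w" by auto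
  then show ?thesis by (auto intro!: member_le_sum)
qed

lemma mn_sq_int: "integrable M (\<lambda>w. (mn t w)\<^sup>2)"
proof (rule Bochner_Integration.integrable_bound)
  show "integrable M (\<lambda>w. \<Sum>k<lam. (xi t k 0 w)\<^sup>2)"
    using n1 by (intro Bochner_Integration.integrable_sum xi_sq_int) auto
  show "(\<lambda>w. (mn t w)\<^sup>2) \<in> borel_measurable M" using mn_meas by measurable
  show "AE w in M. norm ((mn t w)\<^sup>2) \<le> norm (\<Sum>k<lam. (xi t k 0 w)\<^sup>2)"
    using mn_sq_le by (auto intro!: always_eventually simp: sum_nonneg)
qed

lemma mn_law: "distr M (PiM {..<lam} (\<lambda>_. borel)) (\<lambda>w. \<lambda>k\<in>{..<lam}. xi t k 0 w) = std_normal_prod lam"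
proof -
  let ?\<phi> = "\<lambda>k::nat. (Inr (t, k, 0) :: nat + nat \<times> nat \<times> nat)"
  have inj: "inj_on ?\<phi> {..<lam}" by (auto simp: inj_on_def)
  have img: "?\<phi> ` {..<lam} \<subseteq> noise_index n lam" using n1 by (auto simp: noise_index_def)
  have iv: "indep_vars (\<lambda>_. borel) (\<lambda>k. xi t k 0) {..<lam}"
    using indep_vars_reindex[OF ind inj img] by (simp add: noise_family_def)
  show ?thesis unfolding std_normal_prod_def
    by (rule law_PiM_std[OF _ lam_ne iv]) (use n1 in \<open>auto intro: xi_dist\<close>)
qed

lemma mn_E: "expectation (\<lambda>w. (mn t w)\<^sup>2) = E_min_normal_sq lam"
proof -
  have m: "(\<lambda>w. \<lambda>k\<in>{..<lam}. xi t k 0 w) \<in> measurable M (PiM {..<lam} (\<lambda>_. borel))"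
    using n1 by (intro measurable_restrict) (auto intro: xi_meas)
  have g: "(\<lambda>x. (Min ((\<lambda>i. x i) ` {..<lam}))\<^sup>2) \<in> borel_measurable (PiM {..<lam} (\<lambda>_. borel :: real measure))"
    by measurable
  have "E_min_normal_sq lam = (\<integral>x. (Min ((\<lambda>i. x i) ` {..<lam}))\<^sup>2 \<partial>distr M (PiM {..<lam} (\<lambda>_. borel)) (\<lambda>w. \<lambda>k\<in>{..<lam}. xi t k 0 w))"
    unfolding E_min_normal_sq_def mn_law ..
  also have "\<dots> = (\<integral>w. (Min ((\<lambda>i. (\<lambda>k\<in>{..<lam}. xi t k 0 w) i) ` {..<lam}))\<^sup>2 \<partial>M)"
    by (rule integral_distr[OF m g])
  also have "\<dots> = expectation (\<lambda>w. (mn t w)\<^sup>2)"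
    unfolding mn_def by (intro Bochner_Integration.integral_cong refl arg_cong[where f="\<lambda>x. x\<^sup>2"] arg_cong[where f=Min]) auto
  finally show ?thesis by simp
qed

lemma HQ0: "H (Q t 0 w) = 1 / (2 * d) * (((mn t w)\<^sup>2 + (\<Sum>j\<in>{1..<n}. (xi t 0 j w)\<^sup>2)) / real n - 1)"
  unfolding mn_def
proof (rule H_formula)
  show "\<And>k. k < lam \<Longrightarrow> Q t 0 w k = xi t k 0 w" by (simp add: Q_first)
  fix j assume j: "j \<in> {1..<n}"
  then have "j + lam - 1 \<in> KK" "\<not> j + lam - 1 < lam" by (auto simp: KK_def)
  then show "Q t 0 w (j + lam - 1) = xi t 0 j w" using j by (simp add: Q_tail)
qed

lemma Wf_expect: "expectation (Wf t) = (E_min_normal_sq lam - 1) / (2 * d * real n)"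
proof -
  have "Wf t = (\<lambda>w. H (Qs t w))" using Wf_H by auto
  then have "expectation (Wf t) = (\<integral>w. H (Qs t w) \<partial>M)" by simp
  also have "\<dots> = (\<integral>w. H (Q t 0 w) \<partial>M)" by (rule Qs_Q0_integral(1)[OF H_meas])
  also have "\<dots> = (\<integral>w. 1 / (2 * d) * (((mn t w)\<^sup>2 + (\<Sum>j\<in>{1..<n}. (xi t 0 j w)\<^sup>2)) / real n - 1) \<partial>M)"
    by (simp add: HQ0)
  also have "\<dots> = 1 / (2 * d) * ((expectation (\<lambda>w. (mn t w)\<^sup>2) + (\<Sum>j\<in>{1..<n}. expectation (\<lambda>w. (xi t 0 j w)\<^sup>2))) / real n - 1)"
  proof -
    have i1: "integrable M (\<lambda>w. (mn t w)\<^sup>2)" by (rule mn_sq_int)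
    have i2: "\<And>j. j \<in> {1..<n} \<Longrightarrow> integrable M (\<lambda>w. (xi t 0 j w)\<^sup>2)"
      using lam1 by (intro xi_sq_int) auto
    have i3: "integrable M (\<lambda>w. \<Sum>j\<in>{1..<n}. (xi t 0 j w)\<^sup>2)" using i2 by (rule Bochner_Integration.integrable_sum)
    have "(\<integral>w. ((mn t w)\<^sup>2 + (\<Sum>j\<in>{1..<n}. (xi t 0 j w)\<^sup>2)) \<partial>M) =
        expectation (\<lambda>w. (mn t w)\<^sup>2) + (\<Sum>j\<in>{1..<n}. expectation (\<lambda>w. (xi t 0 j w)\<^sup>2))"
      using i1 i3 i2 by (simp add: Bochner_Integration.integral_sum)
    moreover have "integrable M (\<lambda>w. ((mn t w)\<^sup>2 + (\<Sum>j\<in>{1..<n}. (xi t 0 j w)\<^sup>2)))"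
      using i1 i3 by simp
    ultimately show ?thesis by (simp add: prob_space)
  qed
  also have "\<dots> = 1 / (2 * d) * ((E_min_normal_sq lam + (real n - 1)) / real n - 1)"
    using lam1 n1 by (simp add: mn_E xi_sq_E)
  also have "\<dots> = (E_min_normal_sq lam - 1) / (2 * d * real n)"
    using n1 dpos by (simp add: field_simps)
  finally show ?thesis .
qed

end

lemma u_pos:
  fixes q :: real
  assumes q: "0 < q" "q < 1/2" and l: "3 \<le> l"
  shows "0 < q ^ l + 1 - (1 - q) ^ l - 2 * q"
  using l
proof (induction l rule: nat_induct_at_least)
  case base
  have "q ^ 3 + 1 - (1 - q) ^ 3 - 2 * q = q * (1 - q) * (1 - 2 * q)"
    by (simp add: power3_eq_cube algebra_simps)
  moreover have "0 < q * (1 - q) * (1 - 2 * q)" using q by (intro mult_pos_pos) auto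
  ultimately show ?case by simp
next
  case (Suc k)
  then obtain j where k: "k = Suc j" by (cases k) auto
  have "q ^ j \<le> (1 - q) ^ j" using q by (intro power_mono) auto
  then have "q * (1 - q) * q ^ j \<le> q * (1 - q) * (1 - q) ^ j"
    using q by (intro mult_left_mono) auto
  then have "(1 - q) * q ^ k \<le> q * (1 - q) ^ k" by (simp add: k algebra_simps)
  then have "q ^ k + 1 - (1 - q) ^ k - 2 * q \<le> q ^ Suc k + 1 - (1 - q) ^ Suc k - 2 * q"
    by (simp add: algebra_simps)
  then show ?case using Suc by linarith
qed

lemma u_zero:
  fixes q :: real
  assumes "l = 1 \<or> l = 2"
  shows "q ^ l + 1 - (1 - q) ^ l - 2 * q = 0"
  using assms by (auto simp: power2_eq_square algebra_simps)

lemma std_dens_pos: "0 < std_normal_density x"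
  by (rule normal_density_pos) simp

lemma std_dens_ne: "std_normal_density x \<noteq> 0"
  using std_dens_pos[of x] by linarith

lemma std_normal_pos:
  assumes A: "A \<in> sets borel" and pos: "emeasure lborel A > 0"
  shows "emeasure std_normal_measure A > 0"
proof (rule ccontr)
  assume "\<not> emeasure std_normal_measure A > 0"
  then have "emeasure std_normal_measure A = 0" by (simp add: zero_less_iff_neq_zero)
  then have "(\<integral>\<^sup>+x. ennreal (std_normal_density x) * indicator A x \<partial>lborel) = 0"
    unfolding std_normal_measure_def using A by (simp add: emeasure_density)
  then have "AE x in lborel. ennreal (std_normal_density x) * indicator A x = 0"
    using A by (subst (asm) nn_integral_0_iff_AE) auto
  then have "AE x in lborel. x \<notin> A"
    by (rule eventually_mono) (auto simp: std_dens_ne indicator_def split: if_splits)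
  then have "emeasure lborel A = 0"
    using A by (subst (asm) AE_iff_measurable[of A]) auto
  then show False using pos by simp
qed

lemma measurable_antimono_real:
  fixes h :: "real \<Rightarrow> real"
  assumes "\<And>x y. x \<le> y \<Longrightarrow> h y \<le> h x"
  shows "h \<in> borel_measurable borel"
proof -
  have "(\<lambda>x. - h x) \<in> borel_measurable borel"
    by (rule borel_measurable_mono) (auto simp: mono_def assms)
  then have "(\<lambda>x. - (- h x)) \<in> borel_measurable borel" by measurable
  then show ?thesis by simp
qed

context prob_space begin

lemma layer_cake_sq:
  fixes Z :: "'a \<Rightarrow> real"
  assumes Zm[measurable]: "Z \<in> borel_measurable M"
  shows "(\<integral>\<^sup>+w. ennreal ((Z w)\<^sup>2) \<partial>M) =
    (\<integral>\<^sup>+x. ennreal (2 * x) * indicator {0..} x * emeasure M {w \<in> space M. x \<le> \<bar>Z w\<bar>} \<partial>lborel)"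
proof -
  interpret P: pair_sigma_finite M lborel
    by (intro pair_sigma_finite.intro sigma_finite_measure_axioms lborel.sigma_finite_measure_axioms)
  define g where "g w x = (if 0 \<le> x \<and> x \<le> \<bar>Z w\<bar> then ennreal (2 * x) else 0)" for w x
  have gm: "case_prod g \<in> borel_measurable (M \<Otimes>\<^sub>M lborel)"
    unfolding g_def[abs_def] by measurable
  have inner: "(\<integral>\<^sup>+x. g w x \<partial>lborel) = ennreal ((Z w)\<^sup>2)" for w
  proof -
    have "(\<integral>\<^sup>+x. g w x \<partial>lborel) = (\<integral>\<^sup>+x. ennreal (2 * x) * indicator {0..\<bar>Z w\<bar>} x \<partial>lborel)"
      by (intro nn_integral_cong) (auto simp: g_def indicator_def)
    also have "\<dots> = ennreal (\<bar>Z w\<bar>\<^sup>2 - 0\<^sup>2)"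
      by (rule nn_integral_FTC_Icc[where F="\<lambda>x. x\<^sup>2"])
         (auto intro!: derivative_eq_intros)
    finally show ?thesis by simp
  qed
  have inner2: "(\<integral>\<^sup>+w. g w x \<partial>M) = ennreal (2 * x) * indicator {0..} x * emeasure M {w \<in> space M. x \<le> \<bar>Z w\<bar>}" for x
  proof (cases "0 \<le> x")
    case True
    have "(\<integral>\<^sup>+w. g w x \<partial>M) = (\<integral>\<^sup>+w. ennreal (2 * x) * indicator {w \<in> space M. x \<le> \<bar>Z w\<bar>} w \<partial>M)"
      using True by (intro nn_integral_cong) (auto simp: g_def indicator_def)
    also have "\<dots> = ennreal (2 * x) * emeasure M {w \<in> space M. x \<le> \<bar>Z w\<bar>}"
      by (rule nn_integral_cmult_indicator) measurable
    finally show ?thesis using True by simp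
  next
    case False then show ?thesis by (simp add: g_def)
  qed
  have "(\<integral>\<^sup>+w. ennreal ((Z w)\<^sup>2) \<partial>M) = (\<integral>\<^sup>+w. (\<integral>\<^sup>+x. g w x \<partial>lborel) \<partial>M)"
    by (simp add: inner)
  also have "\<dots> = (\<integral>\<^sup>+x. (\<integral>\<^sup>+w. g w x \<partial>M) \<partial>lborel)"
    by (rule P.Fubini'[OF gm, symmetric])
  also have "\<dots> = (\<integral>\<^sup>+x. ennreal (2 * x) * indicator {0..} x * emeasure M {w \<in> space M. x \<le> \<bar>Z w\<bar>} \<partial>lborel)"
    by (simp add: inner2)
  finally show ?thesis .
qed

end

context csa begin

lemma H_bound: "\<bar>H x\<bar> \<le> 1 / (2 * d) * ((\<Sum>k\<in>KK. (x k)\<^sup>2) + 1)"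
proof -
  let ?A = "(Min ((\<lambda>k. x k) ` {..<lam}))\<^sup>2 + (\<Sum>k\<in>{lam..<lam + n - 1}. (x k)\<^sup>2)"
  let ?S = "\<Sum>k\<in>KK. (x k)\<^sup>2"
  have "Min ((\<lambda>k. x k) ` {..<lam}) \<in> (\<lambda>k. x k) ` {..<lam}" using lam_ne by (intro Min_in) auto
  then obtain k0 where k0: "k0 < lam" "Min ((\<lambda>k. x k) ` {..<lam}) = x k0" by auto
  have "?A = (\<Sum>k\<in>insert k0 {lam..<lam + n - 1}. (x k)\<^sup>2)" using k0 by simp
  also have "\<dots> \<le> ?S"
    by (rule sum_mono2) (use k0 n1 in \<open>auto simp: KK_def\<close>)
  finally have AS: "?A \<le> ?S" .
  have A0: "0 \<le> ?A" by (simp add: sum_nonneg)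
  have "?A / real n \<le> ?A / 1" using n1 A0 by (intro divide_left_mono) auto
  then have "?A / real n \<le> ?A" by simp
  moreover have "0 \<le> ?A / real n" using A0 by simp
  ultimately have "\<bar>?A / real n - 1\<bar> \<le> ?S + 1" using AS by linarith
  moreover have "\<bar>H x\<bar> = 1 / (2 * d) * \<bar>?A / real n - 1\<bar>"
    unfolding H_def using dpos by (simp add: abs_mult)
  ultimately show ?thesis using dpos by (simp add: divide_right_mono mult_left_mono)
qed

lemma H4_bound: "(H x) ^ 4 \<le> (1 / (2 * d)) ^ 4 * (real (card KK) + 1) ^ 4 * (1 + (\<Sum>k\<in>KK. ((x k)\<^sup>2) ^ 4))"
proof -
  have "(H x) ^ 4 = \<bar>H x\<bar> ^ 4" by (simp add: power_even_abs_numeral)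
  also have "\<dots> \<le> (1 / (2 * d) * ((\<Sum>k\<in>KK. (x k)\<^sup>2) + 1)) ^ 4"
    by (rule power_mono[OF H_bound]) simp
  also have "\<dots> = (1 / (2 * d)) ^ 4 * ((\<Sum>k\<in>KK. (x k)\<^sup>2) + 1) ^ 4" by (rule power_mult_distrib)
  also have "\<dots> \<le> (1 / (2 * d)) ^ 4 * ((real (card KK) + 1) ^ 4 * (1 + (\<Sum>k\<in>KK. ((x k)\<^sup>2) ^ 4)))"
    by (rule mult_left_mono[OF sum_pow4_bound']) (auto simp: KK_def)
  finally show ?thesis by (simp add: mult.assoc)
qed

lemma Wf4_int: "integrable M (\<lambda>w. (Wf t w) ^ 4)"
proof -
  have g: "(\<lambda>x. (H x) ^ 4) \<in> borel_measurable (PiM KK (\<lambda>_. borel))" using H_meas by measurable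
  have "integrable M (\<lambda>w. (H (Q t 0 w)) ^ 4)"
  proof (rule Bochner_Integration.integrable_bound)
    show "integrable M (\<lambda>w. (1 / (2 * d)) ^ 4 * (real (card KK) + 1) ^ 4 * (1 + (\<Sum>k\<in>KK. ((Q t 0 w k)\<^sup>2) ^ 4)))"
    proof -
      have "\<And>k. k \<in> KK \<Longrightarrow> integrable M (\<lambda>w. ((Q t 0 w k)\<^sup>2) ^ 4)"
        using std_normal_power_integrable[OF Q0_dist, of _ t 8] by (simp add: power_mult[symmetric])
      then have "integrable M (\<lambda>w. \<Sum>k\<in>KK. ((Q t 0 w k)\<^sup>2) ^ 4)"
        by (rule Bochner_Integration.integrable_sum)
      then show ?thesis by simp
    qed
    show "(\<lambda>w. (H (Q t 0 w)) ^ 4) \<in> borel_measurable M"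
      using measurable_comp[OF Q_meas g, of 0 t] lam1 by (simp add: comp_def)
    show "AE w in M. norm ((H (Q t 0 w)) ^ 4) \<le> norm ((1 / (2 * d)) ^ 4 * (real (card KK) + 1) ^ 4 * (1 + (\<Sum>k\<in>KK. ((Q t 0 w k)\<^sup>2) ^ 4)))"
    proof (rule always_eventually, intro allI)
      fix w
      have "0 \<le> (1 / (2 * d)) ^ 4 * (real (card KK) + 1) ^ 4 * (1 + (\<Sum>k\<in>KK. ((Q t 0 w k)\<^sup>2) ^ 4))"
        using dpos by (intro mult_nonneg_nonneg add_nonneg_nonneg sum_nonneg) auto
      then show "norm ((H (Q t 0 w)) ^ 4) \<le> norm ((1 / (2 * d)) ^ 4 * (real (card KK) + 1) ^ 4 * (1 + (\<Sum>k\<in>KK. ((Q t 0 w k)\<^sup>2) ^ 4)))"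
        using H4_bound[of "Q t 0 w"] by (simp add: power_even_abs_numeral)
    qed
  qed
  then have "integrable M (\<lambda>w. (H (Qs t w)) ^ 4)" using Qs_Q0_integral(2)[OF g] by simp
  then show ?thesis by (simp add: Wf_H)
qed

end

lemma abs_pow_le4:
  fixes z :: real assumes "k \<le> 4" shows "\<bar>z\<bar> ^ k \<le> 1 + z ^ 4"
proof (cases "\<bar>z\<bar> \<le> 1")
  case True
  then have "\<bar>z\<bar> ^ k \<le> 1" by (intro power_le_one) auto
  moreover have "0 \<le> z ^ 4" by (simp add: zero_le_even_power)
  ultimately show ?thesis by linarith
next
  case False
  then have "\<bar>z\<bar> ^ k \<le> \<bar>z\<bar> ^ 4" by (intro power_increasing assms) auto
  also have "\<dots> = z ^ 4" by (simp add: power_even_abs_numeral)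
  finally show ?thesis by simp
qed

lemma four_pow_bound: "((a::real) + b) ^ 4 \<le> 8 * (a ^ 4 + b ^ 4)"
proof -
  have "8 * (a ^ 4 + b ^ 4) - (a + b) ^ 4 = (a - b)\<^sup>2 * (5 * (a + b)\<^sup>2 + 2 * a\<^sup>2 + 2 * b\<^sup>2)"
    by (simp add: power2_eq_square power4_eq_xxxx algebra_simps)
  moreover have "0 \<le> (a - b)\<^sup>2 * (5 * (a + b)\<^sup>2 + 2 * a\<^sup>2 + 2 * b\<^sup>2)" by simp
  ultimately show ?thesis by linarith
qed

context prob_space begin

lemma int_pow_le4:
  fixes Z :: "'a \<Rightarrow> real"
  assumes m: "Z \<in> borel_measurable M" and i: "integrable M (\<lambda>w. (Z w) ^ 4)" and k: "k \<le> 4"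
  shows "integrable M (\<lambda>w. (Z w) ^ k)"
proof (rule Bochner_Integration.integrable_bound)
  show "integrable M (\<lambda>w. 1 + (Z w) ^ 4)" using i by simp
  show "(\<lambda>w. Z w ^ k) \<in> borel_measurable M" using m by measurable
  show "AE w in M. norm (Z w ^ k) \<le> norm (1 + (Z w) ^ 4)"
  proof (rule always_eventually, intro allI)
    fix w have "0 \<le> 1 + (Z w) ^ 4" by (simp add: add_nonneg_nonneg zero_le_even_power)
    then show "norm (Z w ^ k) \<le> norm (1 + (Z w) ^ 4)"
      using abs_pow_le4[OF k, of "Z w"] by (simp add: power_abs)
  qed
qed

lemma slln0:
  fixes Y :: "nat \<Rightarrow> 'a \<Rightarrow> real"
  assumes ind: "indep_vars (\<lambda>_. borel) Y UNIV"
    and E0: "\<And>t. expectation (Y t) = 0"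
    and I4: "\<And>t. integrable M (\<lambda>w. (Y t w) ^ 4)"
    and B2: "\<And>t. expectation (\<lambda>w. (Y t w)\<^sup>2) \<le> b2"
    and B4: "\<And>t. expectation (\<lambda>w. (Y t w) ^ 4) \<le> b4"
  shows "AE w in M. (\<lambda>t. (\<Sum>s<t. Y s w) / real t) \<longlonglongrightarrow> 0"
proof -
  have rv[measurable]: "\<And>t. Y t \<in> borel_measurable M" using ind by (simp add: indep_vars_def)
  have Ik: "\<And>t k. k \<le> 4 \<Longrightarrow> integrable M (\<lambda>w. (Y t w) ^ k)" using int_pow_le4[OF rv I4] by blast
  define S where "S t w = (\<Sum>s<t. Y s w)" for t w
  have Sm[measurable]: "\<And>t. S t \<in> borel_measurable M" unfolding S_def by measurable
  have "0 \<le> expectation (\<lambda>w. (Y 0 w)\<^sup>2)" by (rule integral_nonneg_AE) simp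
  then have b2: "0 \<le> b2" using B2[of 0] by linarith
  have "0 \<le> expectation (\<lambda>w. (Y 0 w) ^ 4)" by (rule integral_nonneg_AE) (simp add: zero_le_even_power)
  then have b4: "0 \<le> b4" using B4[of 0] by linarith
  have IS4: "integrable M (\<lambda>w. (S t w) ^ 4)" for t
  proof (rule Bochner_Integration.integrable_bound)
    show "integrable M (\<lambda>w. (real (card {..<t}) + 1) ^ 4 * (1 + (\<Sum>s<t. \<bar>Y s w\<bar> ^ 4)))"
      using I4 by (simp add: power_even_abs_numeral Bochner_Integration.integrable_sum)
    show "(\<lambda>w. (S t w) ^ 4) \<in> borel_measurable M" by measurable
    show "AE w in M. norm ((S t w) ^ 4) \<le> norm ((real (card {..<t}) + 1) ^ 4 * (1 + (\<Sum>s<t. \<bar>Y s w\<bar> ^ 4)))"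
    proof (rule always_eventually, intro allI)
      fix w
      have "\<bar>S t w\<bar> \<le> (\<Sum>s<t. \<bar>Y s w\<bar>) + 1" unfolding S_def
        using sum_abs[of "\<lambda>s. Y s w" "{..<t}"] by linarith
      then have "\<bar>S t w\<bar> ^ 4 \<le> ((\<Sum>s<t. \<bar>Y s w\<bar>) + 1) ^ 4" by (intro power_mono) auto
      also have "\<dots> \<le> (real (card {..<t}) + 1) ^ 4 * (1 + (\<Sum>s<t. \<bar>Y s w\<bar> ^ 4))"
        by (rule sum_pow4_bound') auto
      finally have "\<bar>S t w\<bar> ^ 4 \<le> (real (card {..<t}) + 1) ^ 4 * (1 + (\<Sum>s<t. \<bar>Y s w\<bar> ^ 4))" .
      moreover have "0 \<le> (real (card {..<t}) + 1) ^ 4 * (1 + (\<Sum>s<t. \<bar>Y s w\<bar> ^ 4))"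
        by (intro mult_nonneg_nonneg add_nonneg_nonneg sum_nonneg) auto
      ultimately show "norm ((S t w) ^ 4) \<le> norm ((real (card {..<t}) + 1) ^ 4 * (1 + (\<Sum>s<t. \<bar>Y s w\<bar> ^ 4)))"
        by (simp add: power_abs)
    qed
  qed
  have ISk: "\<And>t k. k \<le> 4 \<Longrightarrow> integrable M (\<lambda>w. (S t w) ^ k)" using int_pow_le4[OF Sm IS4] by blast
  have indSY: "indep_var borel (S t) borel (Y t)" for t
  proof -
    have "indep_var (PiM {..<t} (\<lambda>_. borel)) (\<lambda>w. restrict (\<lambda>i. Y i w) {..<t})
        (PiM {t} (\<lambda>_. borel)) (\<lambda>w. restrict (\<lambda>i. Y i w) {t})"
      by (rule indep_var_restrict[OF ind]) auto
    then have "indep_var borel ((\<lambda>v. \<Sum>s<t. v s) \<circ> (\<lambda>w. restrict (\<lambda>i. Y i w) {..<t}))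
        borel ((\<lambda>v. v t) \<circ> (\<lambda>w. restrict (\<lambda>i. Y i w) {t}))"
      by (rule indep_var_compose) auto
    moreover have "((\<lambda>v. \<Sum>s<t. v s) \<circ> (\<lambda>w. restrict (\<lambda>i. Y i w) {..<t})) = S t"
      by (auto simp: S_def fun_eq_iff)
    moreover have "((\<lambda>v. v t) \<circ> (\<lambda>w. restrict (\<lambda>i. Y i w) {t})) = Y t"
      by (auto simp: fun_eq_iff)
    ultimately show ?thesis by simp
  qed
  have prodE: "expectation (\<lambda>w. (S t w) ^ a * (Y t w) ^ b) = expectation (\<lambda>w. (S t w) ^ a) * expectation (\<lambda>w. (Y t w) ^ b)"
    and prodI: "integrable M (\<lambda>w. (S t w) ^ a * (Y t w) ^ b)"
    if "a \<le> 4" "b \<le> 4" for t a b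
  proof -
    have "indep_var borel ((\<lambda>x. x ^ a) \<circ> S t) borel ((\<lambda>x. x ^ b) \<circ> Y t)"
      by (rule indep_var_compose[OF indSY]) auto
    then have iv: "indep_var borel (\<lambda>w. (S t w) ^ a) borel (\<lambda>w. (Y t w) ^ b)" by (simp add: comp_def)
    show "expectation (\<lambda>w. (S t w) ^ a * (Y t w) ^ b) = expectation (\<lambda>w. (S t w) ^ a) * expectation (\<lambda>w. (Y t w) ^ b)"
      by (rule indep_var_lebesgue_integral[OF iv ISk Ik]) (use that in auto)
    show "integrable M (\<lambda>w. (S t w) ^ a * (Y t w) ^ b)"
      by (rule indep_var_integrable[OF iv ISk Ik]) (use that in auto)
  qed
  have SSuc: "S (Suc t) w = S t w + Y t w" for t w by (simp add: S_def)
  have ES: "expectation (S t) = 0" for t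
  proof -
    have "expectation (S t) = (\<Sum>s<t. expectation (Y s))"
      unfolding S_def[abs_def] using Ik[of 1] by (subst Bochner_Integration.integral_sum) auto
    then show ?thesis using E0 by simp
  qed
  have EY2: "0 \<le> expectation (\<lambda>w. (Y t w)\<^sup>2)" for t by (simp add: integral_nonneg_AE)
  have ES2: "expectation (\<lambda>w. (S t w)\<^sup>2) \<le> real t * b2" for t
  proof (induction t)
    case 0 then show ?case by (simp add: S_def)
  next
    case (Suc t)
    have "(\<lambda>w. (S (Suc t) w)\<^sup>2) = (\<lambda>w. (S t w) ^ 2 * (Y t w) ^ 0 + 2 * ((S t w) ^ 1 * (Y t w) ^ 1) + (S t w) ^ 0 * (Y t w) ^ 2)"
      by (auto simp: SSuc power2_eq_square algebra_simps)
    then have "expectation (\<lambda>w. (S (Suc t) w)\<^sup>2) =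
        expectation (\<lambda>w. (S t w) ^ 2 * (Y t w) ^ 0) + 2 * expectation (\<lambda>w. (S t w) ^ 1 * (Y t w) ^ 1)
        + expectation (\<lambda>w. (S t w) ^ 0 * (Y t w) ^ 2)"
      using prodI[of 2 0 t] prodI[of 1 1 t] prodI[of 0 2 t] by simp
    also have "\<dots> = expectation (\<lambda>w. (S t w)\<^sup>2) + expectation (\<lambda>w. (Y t w)\<^sup>2)"
      using prodE[of 1 1 t] E0[of t] by (simp add: prob_space)
    also have "\<dots> \<le> real t * b2 + b2" using Suc B2[of t] by linarith
    finally show ?case by (simp add: algebra_simps)
  qed
  have ES4: "expectation (\<lambda>w. (S t w) ^ 4) \<le> real t * b4 + 3 * (real t)\<^sup>2 * b2\<^sup>2" for t
  proof (induction t)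
    case 0 then show ?case by (simp add: S_def)
  next
    case (Suc t)
    have "(\<lambda>w. (S (Suc t) w) ^ 4) = (\<lambda>w. (S t w) ^ 4 * (Y t w) ^ 0 + 4 * ((S t w) ^ 3 * (Y t w) ^ 1)
        + 6 * ((S t w) ^ 2 * (Y t w) ^ 2) + 4 * ((S t w) ^ 1 * (Y t w) ^ 3) + (S t w) ^ 0 * (Y t w) ^ 4)"
      by (auto simp: SSuc power2_eq_square power3_eq_cube power4_eq_xxxx algebra_simps)
    then have "expectation (\<lambda>w. (S (Suc t) w) ^ 4) =
        expectation (\<lambda>w. (S t w) ^ 4 * (Y t w) ^ 0) + 4 * expectation (\<lambda>w. (S t w) ^ 3 * (Y t w) ^ 1)
        + 6 * expectation (\<lambda>w. (S t w) ^ 2 * (Y t w) ^ 2) + 4 * expectation (\<lambda>w. (S t w) ^ 1 * (Y t w) ^ 3)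
        + expectation (\<lambda>w. (S t w) ^ 0 * (Y t w) ^ 4)"
      using prodI[of 4 0 t] prodI[of 3 1 t] prodI[of 2 2 t] prodI[of 1 3 t] prodI[of 0 4 t] by simp
    also have "\<dots> = expectation (\<lambda>w. (S t w) ^ 4) + 6 * (expectation (\<lambda>w. (S t w)\<^sup>2) * expectation (\<lambda>w. (Y t w)\<^sup>2))
        + expectation (\<lambda>w. (Y t w) ^ 4)"
      using prodE[of 3 1 t] prodE[of 2 2 t] prodE[of 1 3 t] E0[of t] ES[of t] by (simp add: prob_space)
    also have "expectation (\<lambda>w. (S t w)\<^sup>2) * expectation (\<lambda>w. (Y t w)\<^sup>2) \<le> (real t * b2) * b2"
      by (intro mult_mono ES2 B2 EY2) (use b2 in auto)
    finally have "expectation (\<lambda>w. (S (Suc t) w) ^ 4) \<le> real t * b4 + 3 * (real t)\<^sup>2 * b2\<^sup>2 + 6 * (real t * b2 * b2) + b4"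
      using Suc B4[of t] by linarith
    also have "\<dots> \<le> real (Suc t) * b4 + 3 * (real (Suc t))\<^sup>2 * b2\<^sup>2"
      using b2 by (simp add: power2_eq_square algebra_simps)
    finally show ?case .
  qed
  define C where "C = b4 + 3 * b2\<^sup>2"
  have ES4': "expectation (\<lambda>w. (S t w / real t) ^ 4) \<le> C * inverse (real t ^ 2)" for t
  proof (cases "t = 0")
    case True then show ?thesis by (simp add: S_def)
  next
    case False
    then have t1: "1 \<le> real t" by simp
    have "expectation (\<lambda>w. (S t w / real t) ^ 4) = expectation (\<lambda>w. (S t w) ^ 4) / real t ^ 4"
      by (simp add: power_divide)
    also have "\<dots> \<le> (real t * b4 + 3 * (real t)\<^sup>2 * b2\<^sup>2) / real t ^ 4"
      by (rule divide_right_mono[OF ES4]) simp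
    also have "\<dots> \<le> ((real t)\<^sup>2 * b4 + 3 * (real t)\<^sup>2 * b2\<^sup>2) / real t ^ 4"
    proof -
      have "real t * b4 \<le> (real t)\<^sup>2 * b4" using t1 b4 by (simp add: power2_eq_square mult_right_mono)
      then show ?thesis by (intro divide_right_mono) auto
    qed
    also have "\<dots> = C * inverse (real t ^ 2)"
      using False by (simp add: C_def field_simps power2_eq_square power4_eq_xxxx)
    finally show ?thesis .
  qed
  define f where "f t w = ennreal ((S t w / real t) ^ 4)" for t w
  have fm[measurable]: "\<And>t. f t \<in> borel_measurable M" unfolding f_def by measurable
  have sumC: "summable (\<lambda>t. C * inverse (real t ^ 2))"
    by (intro summable_mult inverse_power_summable) simp
  have C0: "0 \<le> C" using b2 b4 by (simp add: C_def)
  have "(\<integral>\<^sup>+ w. (\<Sum>t. f t w) \<partial>M) = (\<Sum>t. \<integral>\<^sup>+ w. f t w \<partial>M)"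
    by (rule nn_integral_suminf) simp
  also have "\<dots> \<le> (\<Sum>t. ennreal (C * inverse (real t ^ 2)))"
  proof (rule suminf_le)
    fix t
    have "(\<integral>\<^sup>+ w. f t w \<partial>M) = ennreal (expectation (\<lambda>w. (S t w / real t) ^ 4))"
      unfolding f_def
      by (rule nn_integral_eq_integral) (use ISk[of 4 t] in \<open>auto simp: power_divide zero_le_even_power\<close>)
    also have "\<dots> \<le> ennreal (C * inverse (real t ^ 2))" by (rule ennreal_leI[OF ES4'])
    finally show "(\<integral>\<^sup>+ w. f t w \<partial>M) \<le> ennreal (C * inverse (real t ^ 2))" .
  qed auto
  also have "\<dots> = ennreal (\<Sum>t. C * inverse (real t ^ 2))"
    by (rule suminf_ennreal2[OF _ sumC]) (use C0 in auto)
  finally have fin: "(\<integral>\<^sup>+ w. (\<Sum>t. f t w) \<partial>M) \<noteq> \<infinity>" by (auto simp: top_unique)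
  have "AE w in M. (\<Sum>t. f t w) \<noteq> \<infinity>"
    by (rule nn_integral_PInf_AE[OF _ fin]) simp
  then show ?thesis
  proof (rule eventually_mono)
    fix w assume "(\<Sum>t. f t w) \<noteq> \<infinity>"
    then have "summable (\<lambda>t. (S t w / real t) ^ 4)"
      unfolding f_def by (intro summable_suminf_not_top) (auto simp: zero_le_even_power)
    then have "(\<lambda>t. (S t w / real t) ^ 4) \<longlonglongrightarrow> 0" by (rule summable_LIMSEQ_zero)
    then have "(\<lambda>t. root 4 ((S t w / real t) ^ 4)) \<longlonglongrightarrow> root 4 0" by (rule tendsto_real_root)
    moreover have "\<And>t. \<bar>root 4 ((S t w / real t) ^ 4)\<bar> = \<bar>S t w / real t\<bar>" by (rule root_abs_power) simp
    ultimately have "(\<lambda>t. \<bar>S t w / real t\<bar>) \<longlonglongrightarrow> 0"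
    proof -
      assume a: "(\<lambda>t. root 4 ((S t w / real t) ^ 4)) \<longlonglongrightarrow> root 4 0"
        and b: "\<And>t. \<bar>root 4 ((S t w / real t) ^ 4)\<bar> = \<bar>S t w / real t\<bar>"
      have "(\<lambda>t. \<bar>root 4 ((S t w / real t) ^ 4)\<bar>) \<longlonglongrightarrow> \<bar>root 4 0\<bar>" by (rule tendsto_rabs[OF a])
      then show ?thesis unfolding b by simp
    qed
    then show "(\<lambda>t. (\<Sum>s<t. Y s w) / real t) \<longlonglongrightarrow> 0"
      unfolding S_def by (rule tendsto_rabs_zero_cancel)
  qed
qed

end

context prob_space begin

lemma Emin_cmp:
  fixes a :: "nat \<Rightarrow> 'a \<Rightarrow> real" and lam :: nat
  assumes lam: "lam \<ge> 1" and ind: "indep_vars (\<lambda>_. borel) a {..<lam}"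
    and dist: "\<And>i. i < lam \<Longrightarrow> distributed M lborel (a i) (\<lambda>x. ennreal (std_normal_density x))"
  shows "(lam \<le> 2 \<longrightarrow> expectation (\<lambda>w. (Min ((\<lambda>i. a i w) ` {..<lam}))\<^sup>2) = 1) \<and>
         (lam \<ge> 3 \<longrightarrow> expectation (\<lambda>w. (Min ((\<lambda>i. a i w) ` {..<lam}))\<^sup>2) > 1)"
proof -
  interpret N: prob_space std_normal_measure by (rule prob_space_std_normal)
  have l0: "0 < lam" using lam by simp
  have ne: "{..<lam} \<noteq> {}" using l0 by auto
  have am[measurable]: "a i \<in> borel_measurable M" if "i < lam" for i
    using dist[OF that] by (simp add: distributed_def)
  have a0m[measurable]: "a 0 \<in> borel_measurable M" using am l0 by simp
  define m where "m w = Min ((\<lambda>i. a i w) ` {..<lam})" for w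
  have mm[measurable]: "m \<in> borel_measurable M"
    unfolding m_def[abs_def] by (intro borel_measurable_Min) auto
  define q where "q x = measure std_normal_measure {x..}" for x
  have Pge: "prob {w \<in> space M. x \<le> a i w} = q x" if "i < lam" for i x
  proof -
    have "prob {w \<in> space M. x \<le> a i w} = measure (distr M borel (a i)) {x..}"
      by (subst measure_distr) (auto intro: am[OF that] simp: vimage_def Int_def conj_commute)
    then show ?thesis using distr_std_normal[OF dist[OF that]] by (simp add: q_def)
  qed
  have Ple: "prob {w \<in> space M. a i w \<le> - x} = q x" if "i < lam" for i x
  proof -
    have d: "distributed M lborel (\<lambda>w. 0 + (-1) * a i w) (\<lambda>y. ennreal (normal_density (0 + (-1) * 0) (\<bar>-1\<bar> * 1) y))"
      by (rule normal_density_affine[OF dist[OF that]]) auto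
    then have d': "distributed M lborel (\<lambda>w. - a i w) (\<lambda>y. ennreal (std_normal_density y))" by simp
    have mi: "(\<lambda>w. - a i w) \<in> borel_measurable M" using am[OF that] by measurable
    have "prob {w \<in> space M. a i w \<le> - x} = prob {w \<in> space M. x \<le> - a i w}"
      by (rule arg_cong[where f=prob]) auto
    also have "\<dots> = measure (distr M borel (\<lambda>w. - a i w)) {x..}"
      by (subst measure_distr[OF mi]) (auto simp: vimage_def Int_def conj_commute)
    finally have "prob {w \<in> space M. a i w \<le> - x} = measure (distr M borel (\<lambda>w. - a i w)) {x..}" .
    then show ?thesis using distr_std_normal[OF d'] by (simp add: q_def)
  qed
  have Pgt: "prob {w \<in> space M. - x < a i w} = 1 - q x" if "i < lam" for i x
  proof -
    have "{w \<in> space M. - x < a i w} = space M - {w \<in> space M. a i w \<le> - x}" by auto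
    moreover have "{w \<in> space M. a i w \<le> - x} \<in> events" using am[OF that] by measurable
    ultimately show ?thesis using prob_compl Ple[OF that] by simp
  qed
  have Pm_ge: "prob {w \<in> space M. x \<le> m w} = q x ^ lam" for x
  proof -
    have "{w \<in> space M. x \<le> m w} = (\<Inter>i\<in>{..<lam}. a i -` {x..} \<inter> space M)"
      using ne by (auto simp: m_def Min_ge_iff)
    then have "prob {w \<in> space M. x \<le> m w} = (\<Prod>i\<in>{..<lam}. prob (a i -` {x..} \<inter> space M))"
      using indep_varsD_finite[OF ind ne] by simp
    also have "\<dots> = (\<Prod>i\<in>{..<lam}. q x)"
      using Pge by (intro prod.cong) (auto simp: vimage_def Int_def conj_commute)
    finally show ?thesis by simp
  qed
  have Pm_gt: "prob {w \<in> space M. - x < m w} = (1 - q x) ^ lam" for x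
  proof -
    have "{w \<in> space M. - x < m w} = (\<Inter>i\<in>{..<lam}. a i -` {- x<..} \<inter> space M)"
      using ne by (auto simp: m_def Min_gr_iff)
    then have "prob {w \<in> space M. - x < m w} = (\<Prod>i\<in>{..<lam}. prob (a i -` {- x<..} \<inter> space M))"
      using indep_varsD_finite[OF ind ne] by simp
    also have "\<dots> = (\<Prod>i\<in>{..<lam}. 1 - q x)"
      using Pgt by (intro prod.cong) (auto simp: vimage_def Int_def conj_commute)
    finally show ?thesis by simp
  qed
  have Pm_le: "prob {w \<in> space M. m w \<le> - x} = 1 - (1 - q x) ^ lam" for x
  proof -
    have "{w \<in> space M. m w \<le> - x} = space M - {w \<in> space M. - x < m w}" by auto
    moreover have "{w \<in> space M. - x < m w} \<in> events" by measurable
    ultimately show ?thesis using prob_compl Pm_gt by simp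
  qed
  have Pabs: "prob {w \<in> space M. x \<le> \<bar>Z w\<bar>} = prob {w \<in> space M. x \<le> Z w} + prob {w \<in> space M. Z w \<le> - x}"
    if "0 < x" "Z \<in> borel_measurable M" for x and Z :: "'a \<Rightarrow> real"
  proof -
    have "{w \<in> space M. x \<le> \<bar>Z w\<bar>} = {w \<in> space M. x \<le> Z w} \<union> {w \<in> space M. Z w \<le> - x}" by auto
    moreover have "{w \<in> space M. x \<le> Z w} \<inter> {w \<in> space M. Z w \<le> - x} = {}" using that by auto
    moreover have "{w \<in> space M. x \<le> Z w} \<in> events" "{w \<in> space M. Z w \<le> - x} \<in> events"
      using that(2) by measurable
    ultimately show ?thesis by (simp add: finite_measure_Union)
  qed
  have Pabs_m: "prob {w \<in> space M. x \<le> \<bar>m w\<bar>} = q x ^ lam + 1 - (1 - q x) ^ lam" if "0 < x" for x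
    using Pabs[OF that mm] Pm_ge Pm_le by simp
  have Pabs_a: "prob {w \<in> space M. x \<le> \<bar>a 0 w\<bar>} = 2 * q x" if "0 < x" for x
    using Pabs[OF that a0m] Pge[of 0] Ple[of 0] l0 by simp
  have qpos: "0 < q x" if "0 < x" for x
  proof -
    have "0 < emeasure std_normal_measure {x..x+1}"
      by (rule std_normal_pos) auto
    also have "\<dots> \<le> emeasure std_normal_measure {x..}"
      by (rule emeasure_mono) (auto simp: std_normal_measure_def)
    finally show ?thesis by (simp add: q_def N.emeasure_eq_measure)
  qed
  have qhalf: "q x < 1/2" if "0 < x" for x
  proof -
    let ?mid = "{w \<in> space M. - x < a 0 w \<and> a 0 w < x}"
    have "{w \<in> space M. - x < a 0 w} = ?mid \<union> {w \<in> space M. x \<le> a 0 w}" using that by auto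
    moreover have "?mid \<inter> {w \<in> space M. x \<le> a 0 w} = {}" by auto
    moreover have "?mid \<in> events" "{w \<in> space M. x \<le> a 0 w} \<in> events" by measurable
    ultimately have "prob {w \<in> space M. - x < a 0 w} = prob ?mid + prob {w \<in> space M. x \<le> a 0 w}"
      by (simp add: finite_measure_Union)
    then have pm: "prob ?mid = 1 - 2 * q x" using Pgt[of 0] Pge[of 0] l0 by simp
    have "prob ?mid = measure (distr M borel (a 0)) {- x<..<x}"
      by (subst measure_distr) (auto simp: vimage_def Int_def conj_commute)
    also have "\<dots> = measure std_normal_measure {- x<..<x}" using distr_std_normal[OF dist[OF l0]] by simp
    finally have "prob ?mid = measure std_normal_measure {- x<..<x}" .
    moreover have "0 < emeasure std_normal_measure {- x<..<x}"
      using that by (intro std_normal_pos) auto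
    ultimately have "0 < prob ?mid" by (simp add: N.emeasure_eq_measure)
    then show ?thesis using pm by simp
  qed
  define u where "u x = q x ^ lam + 1 - (1 - q x) ^ lam - 2 * q x" for x
  have u0: "0 \<le> u x" if "0 < x" for x
  proof (cases "lam \<le> 2")
    case True then have "lam = 1 \<or> lam = 2" using lam by auto
    then show ?thesis by (simp add: u_def u_zero)
  next
    case False
    then show ?thesis using u_pos[OF qpos[OF that] qhalf[OF that], of lam] by (simp add: u_def)
  qed
  have qm[measurable]: "q \<in> borel_measurable borel"
  proof (rule measurable_antimono_real)
    fix x y :: real assume xy: "x \<le> y"
    have ss: "sets std_normal_measure = sets borel" by (simp add: std_normal_measure_def)
    show "q y \<le> q x" unfolding q_def
      by (rule N.finite_measure_mono) (use xy ss in auto)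
  qed
  have Pam: "(\<lambda>x. prob {w \<in> space M. x \<le> \<bar>a 0 w\<bar>}) \<in> borel_measurable borel"
    by (rule measurable_antimono_real) (auto intro!: finite_measure_mono)
  define G where "G x = ennreal (2 * x) * indicator {0..} x * emeasure M {w \<in> space M. x \<le> \<bar>a 0 w\<bar>}" for x
  define U where "U x = (if 0 < x then ennreal (2 * x * u x) else 0)" for x
  have Gm: "G \<in> borel_measurable borel"
  proof -
    have "G = (\<lambda>x. ennreal (2 * x) * indicator {0..} x * ennreal (prob {w \<in> space M. x \<le> \<bar>a 0 w\<bar>}))"
      by (auto simp: G_def emeasure_eq_measure fun_eq_iff)
    then show ?thesis using Pam by simp
  qed
  have Um: "U \<in> borel_measurable borel" unfolding U_def[abs_def] u_def[abs_def] by measurable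
  have split: "ennreal (2 * x) * indicator {0..} x * emeasure M {w \<in> space M. x \<le> \<bar>m w\<bar>} = G x + U x" for x
  proof (cases "0 < x")
    case True
    have "ennreal (2 * x) * indicator {0..} x * emeasure M {w \<in> space M. x \<le> \<bar>m w\<bar>}
        = ennreal (2 * x * (2 * q x) + 2 * x * u x)"
      using True by (simp add: emeasure_eq_measure Pabs_m ennreal_mult'[symmetric] u_def algebra_simps)
    also have "\<dots> = ennreal (2 * x * (2 * q x)) + ennreal (2 * x * u x)"
      using True u0[OF True] qpos[OF True] by (intro ennreal_plus) auto
    also have "ennreal (2 * x * (2 * q x)) = G x"
      using True by (simp add: G_def emeasure_eq_measure Pabs_a ennreal_mult'[symmetric])
    finally show ?thesis using True by (simp add: U_def)
  next
    case False
    then have "ennreal (2 * x) = 0" by (simp add: ennreal_eq_0_iff)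
    then show ?thesis using False by (simp add: G_def U_def)
  qed
  have ai2: "integrable M (\<lambda>w. (a i w)\<^sup>2)" if "i < lam" for i
    using std_normal_power_integrable[OF dist[OF that], of 2] by simp
  have mi2: "integrable M (\<lambda>w. (m w)\<^sup>2)"
  proof (rule Bochner_Integration.integrable_bound)
    show "integrable M (\<lambda>w. \<Sum>i<lam. (a i w)\<^sup>2)"
      by (intro Bochner_Integration.integrable_sum ai2) auto
    show "(\<lambda>w. (m w)\<^sup>2) \<in> borel_measurable M" by measurable
    show "AE w in M. norm ((m w)\<^sup>2) \<le> norm (\<Sum>i<lam. (a i w)\<^sup>2)"
    proof (rule always_eventually, intro allI)
      fix w
      have "m w \<in> (\<lambda>i. a i w) ` {..<lam}" unfolding m_def using ne by (intro Min_in) auto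
      then obtain k where "k < lam" "m w = a k w" by auto
      then have "(m w)\<^sup>2 \<le> (\<Sum>i<lam. (a i w)\<^sup>2)" by (auto intro!: member_le_sum)
      then show "norm ((m w)\<^sup>2) \<le> norm (\<Sum>i<lam. (a i w)\<^sup>2)" by (simp add: sum_nonneg)
    qed
  qed
  have "ennreal (expectation (\<lambda>w. (m w)\<^sup>2)) = (\<integral>\<^sup>+w. ennreal ((m w)\<^sup>2) \<partial>M)"
    by (rule nn_integral_eq_integral[symmetric, OF mi2]) auto
  also have "\<dots> = (\<integral>\<^sup>+x. G x + U x \<partial>lborel)"
    by (simp add: layer_cake_sq[OF mm] split)
  also have "\<dots> = (\<integral>\<^sup>+x. G x \<partial>lborel) + (\<integral>\<^sup>+x. U x \<partial>lborel)"
    by (rule nn_integral_add) (use Gm Um in auto)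
  also have "(\<integral>\<^sup>+x. G x \<partial>lborel) = (\<integral>\<^sup>+w. ennreal ((a 0 w)\<^sup>2) \<partial>M)"
    by (simp add: layer_cake_sq[OF a0m] G_def)
  also have "\<dots> = ennreal (expectation (\<lambda>w. (a 0 w)\<^sup>2))"
    by (rule nn_integral_eq_integral[OF ai2]) (use l0 in auto)
  also have "expectation (\<lambda>w. (a 0 w)\<^sup>2) = 1"
    by (rule std_normal_sq_expectation[OF dist[OF l0]])
  finally have main: "ennreal (expectation (\<lambda>w. (m w)\<^sup>2)) = 1 + (\<integral>\<^sup>+x. U x \<partial>lborel)" by simp
  have Enn: "0 \<le> expectation (\<lambda>w. (m w)\<^sup>2)" by (rule integral_nonneg_AE) simp
  have c1: "lam \<le> 2 \<longrightarrow> expectation (\<lambda>w. (m w)\<^sup>2) = 1"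
  proof
    assume "lam \<le> 2" then have "lam = 1 \<or> lam = 2" using lam by auto
    then have "\<And>x. U x = 0" by (simp add: U_def u_def u_zero)
    then have "ennreal (expectation (\<lambda>w. (m w)\<^sup>2)) = ennreal 1" using main by simp
    then show "expectation (\<lambda>w. (m w)\<^sup>2) = 1" using Enn by (subst (asm) ennreal_inj) auto
  qed
  have c2: "lam \<ge> 3 \<longrightarrow> expectation (\<lambda>w. (m w)\<^sup>2) > 1"
  proof
    assume l3: "lam \<ge> 3"
    have Upos: "0 < U x" if "0 < x" for x
      using u_pos[OF qpos[OF that] qhalf[OF that] l3] that by (simp add: U_def u_def)
    have "(\<integral>\<^sup>+x. U x \<partial>lborel) \<noteq> 0"
    proof
      assume "(\<integral>\<^sup>+x. U x \<partial>lborel) = 0"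
      then have "AE x in lborel. U x = 0" using Um by (subst (asm) nn_integral_0_iff_AE) auto
      then have "AE x in lborel. (x::real) \<notin> {0<..<1}"
        by (rule eventually_mono) (use Upos in \<open>fastforce\<close>)
      then have "emeasure lborel {0<..<(1::real)} = 0"
        by (subst (asm) AE_iff_measurable[of "{0<..<1}"]) auto
      then show False by simp
    qed
    then have "0 < (\<integral>\<^sup>+x. U x \<partial>lborel)" by (simp add: zero_less_iff_neq_zero)
    then have "(1::ennreal) + 0 < 1 + (\<integral>\<^sup>+x. U x \<partial>lborel)"
      by (subst ennreal_add_left_cancel_less) simp
    then have "1 < 1 + (\<integral>\<^sup>+x. U x \<partial>lborel)" by simp
    then have "ennreal 1 < ennreal (expectation (\<lambda>w. (m w)\<^sup>2))" using main by simp
    then show "expectation (\<lambda>w. (m w)\<^sup>2) > 1" by (simp add: ennreal_less_iff)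
  qed
  show ?thesis using c1 c2 by (simp add: m_def)
qed

end

context csa begin

lemma a_indep: "indep_vars (\<lambda>_. borel) (\<lambda>k. xi t k 0) {..<lam}"
proof -
  let ?\<phi> = "\<lambda>k::nat. (Inr (t, k, 0) :: nat + nat \<times> nat \<times> nat)"
  have inj: "inj_on ?\<phi> {..<lam}" by (auto simp: inj_on_def)
  have img: "?\<phi> ` {..<lam} \<subseteq> noise_index n lam" using n1 by (auto simp: noise_index_def)
  show ?thesis
    using indep_vars_reindex[OF ind inj img] by (simp add: noise_family_def)
qed

lemma Emin_facts: "(lam \<le> 2 \<longrightarrow> E_min_normal_sq lam = 1) \<and> (lam \<ge> 3 \<longrightarrow> E_min_normal_sq lam > 1)"
proof -
  have "\<And>i. i < lam \<Longrightarrow> distributed M lborel (xi 0 i 0) (\<lambda>x. ennreal (std_normal_density x))"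
    using n1 by (intro xi_dist) auto
  then show ?thesis
    using Emin_cmp[OF lam1 a_indep[of 0]] mn_E[of 0] unfolding mn_def by simp
qed

lemma sigma_rec:
  assumes "s0 > 0"
  shows "csa_sigma n lam 1 d (\<lambda>x. x 0) X0 s0 p0 xi t w > 0"
    and "csa_sigma n lam 1 d (\<lambda>x. x 0) X0 s0 p0 xi (Suc t) w =
         csa_sigma n lam 1 d (\<lambda>x. x 0) X0 s0 p0 xi t w * exp (Wf t w)"
  using csa_step[OF assms lam1, of n d X0 "\<lambda>j. p0 j w" "\<lambda>t i j. xi t i j w" t]
  unfolding csa_sigma_def Wf_def by auto

lemma sigma_0: "csa_sigma n lam 1 d (\<lambda>x. x 0) X0 s0 p0 xi 0 w = s0"
  by (simp add: csa_sigma_def)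

lemma Wf_int: "integrable M (Wf t)"
  using int_pow_le4[OF Wf_meas Wf4_int, of 1 t] by simp

lemma Wf_same_integral:
  fixes g :: "real \<Rightarrow> real"
  assumes g: "g \<in> borel_measurable borel"
  shows "expectation (\<lambda>w. g (Wf t w)) = expectation (\<lambda>w. g (Wf 0 w))"
proof -
  have "expectation (\<lambda>w. g (Wf t w)) = (\<integral>x. g x \<partial>distr M borel (Wf t))"
    by (rule integral_distr[symmetric, OF Wf_meas g])
  also have "\<dots> = (\<integral>x. g x \<partial>distr M borel (Wf 0))" by (simp only: Wf_law)
  also have "\<dots> = expectation (\<lambda>w. g (Wf 0 w))" by (rule integral_distr[OF Wf_meas g])
  finally show ?thesis .
qed

lemma slln_Wf:
  "AE w in M. (\<lambda>t. (\<Sum>s<t. Wf s w) / real t) \<longlonglongrightarrow> (E_min_normal_sq lam - 1) / (2 * d * real n)"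
proof -
  define \<mu> where "\<mu> = (E_min_normal_sq lam - 1) / (2 * d * real n)"
  define Y where "Y t w = Wf t w - \<mu>" for t w
  have Wm[measurable]: "\<And>t. Wf t \<in> borel_measurable M" by (rule Wf_meas)
  have indY: "indep_vars (\<lambda>_. borel) Y UNIV"
    unfolding Y_def by (rule indep_vars_compose2[OF Wf_indep]) simp
  have E0: "expectation (Y t) = 0" for t
    unfolding Y_def using Wf_int[of t] by (simp add: Wf_expect \<mu>_def prob_space)
  have I4: "integrable M (\<lambda>w. (Y t w) ^ 4)" for t
  proof (rule Bochner_Integration.integrable_bound)
    show "integrable M (\<lambda>w. 8 * ((Wf t w) ^ 4 + (- \<mu>) ^ 4))" using Wf4_int[of t] by simp
    show "(\<lambda>w. (Y t w) ^ 4) \<in> borel_measurable M" unfolding Y_def by measurable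
    show "AE w in M. norm ((Y t w) ^ 4) \<le> norm (8 * ((Wf t w) ^ 4 + (- \<mu>) ^ 4))"
    proof (rule always_eventually, intro allI)
      fix w
      have "(Y t w) ^ 4 \<le> 8 * ((Wf t w) ^ 4 + (- \<mu>) ^ 4)"
        unfolding Y_def using four_pow_bound[of "Wf t w" "- \<mu>"] by simp
      moreover have "0 \<le> (Y t w) ^ 4" by (simp add: zero_le_even_power)
      ultimately show "norm ((Y t w) ^ 4) \<le> norm (8 * ((Wf t w) ^ 4 + (- \<mu>) ^ 4))" by simp
    qed
  qed
  have B2: "expectation (\<lambda>w. (Y t w)\<^sup>2) \<le> expectation (\<lambda>w. (Y 0 w)\<^sup>2)" for t
    unfolding Y_def using Wf_same_integral[of "\<lambda>x. (x - \<mu>)\<^sup>2" t] by simp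
  have B4: "expectation (\<lambda>w. (Y t w) ^ 4) \<le> expectation (\<lambda>w. (Y 0 w) ^ 4)" for t
    unfolding Y_def using Wf_same_integral[of "\<lambda>x. (x - \<mu>) ^ 4" t] by simp
  have "AE w in M. (\<lambda>t. (\<Sum>s<t. Y s w) / real t) \<longlonglongrightarrow> 0"
    by (rule slln0[OF indY E0 I4 B2 B4])
  then show ?thesis
  proof (rule eventually_mono)
    fix w assume lim: "(\<lambda>t. (\<Sum>s<t. Y s w) / real t) \<longlonglongrightarrow> 0"
    have "(\<lambda>t. (\<Sum>s<t. Y s w) / real t + \<mu>) \<longlonglongrightarrow> 0 + \<mu>" by (intro tendsto_add lim tendsto_const)
    moreover have "eventually (\<lambda>t. (\<Sum>s<t. Y s w) / real t + \<mu> = (\<Sum>s<t. Wf s w) / real t) sequentially"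
    proof (rule eventually_sequentiallyI[of 1])
      fix t :: nat assume "1 \<le> t"
      then show "(\<Sum>s<t. Y s w) / real t + \<mu> = (\<Sum>s<t. Wf s w) / real t"
        by (simp add: Y_def sum_subtractf field_simps)
    qed
    ultimately have "(\<lambda>t. (\<Sum>s<t. Wf s w) / real t) \<longlonglongrightarrow> \<mu>" using Lim_transform_eventually by fastforce
    then show "(\<lambda>t. (\<Sum>s<t. Wf s w) / real t) \<longlonglongrightarrow> (E_min_normal_sq lam - 1) / (2 * d * real n)"
      by (simp add: \<mu>_def)
  qed
qed

end


theorem theorem1:
  fixes M :: "'a measure" and n lam :: nat and d s0 :: real
    and X0 :: "nat \<Rightarrow> real"
    and p0 :: "nat \<Rightarrow> 'a \<Rightarrow> real" and xi :: "nat \<Rightarrow> nat \<Rightarrow> nat \<Rightarrow> 'a \<Rightarrow> real"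
  assumes "prob_space M" and "n \<ge> 1" and "lam \<ge> 1" and "d > 0" and "s0 > 0"
    and "prob_space.indep_vars M (\<lambda>_. borel) (noise_family p0 xi) (noise_index n lam)"
    and "\<And>k. k \<in> noise_index n lam \<Longrightarrow>
           distributed M lborel (noise_family p0 xi k) (\<lambda>x. ennreal (std_normal_density x))"
  defines "\<sigma> \<equiv> csa_sigma n lam 1 d (\<lambda>x. x 0) X0 s0 p0 xi"
    and "W \<equiv> (\<lambda>t w. ln (csa_sigma n lam 1 d (\<lambda>x. x 0) X0 s0 p0 xi (Suc t) w)
                   - ln (csa_sigma n lam 1 d (\<lambda>x. x 0) X0 s0 p0 xi t w))"
  shows
    "(lam \<ge> 3 \<longrightarrow>
       (AE w in M. (\<lambda>t. ln (\<sigma> t w / s0) / real t)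
           \<longlonglongrightarrow> (E_min_normal_sq lam - 1) / (2 * d * real n))
     \<and> (\<forall>t. prob_space.expectation M (\<lambda>w. ln (\<sigma> (Suc t) w / \<sigma> t w))
             = (E_min_normal_sq lam - 1) / (2 * d * real n))
     \<and> (E_min_normal_sq lam - 1) / (2 * d * real n) > 0)
   \<and> (lam = 1 \<longrightarrow>
       (\<forall>t w. ln (\<sigma> (Suc t) w) = ln (\<sigma> t w) + W t w)
     \<and> prob_space.indep_vars M (\<lambda>_. borel) W UNIV
     \<and> (\<forall>t. prob_space.expectation M (W t) = 0)
     \<and> (\<forall>t. distr M borel (W t) =
            distr (std_normal_prod n) borel
              (\<lambda>x. 1 / (2 * d) * ((\<Sum>j<n. (x j)\<^sup>2) / real n - 1))))
   \<and> (lam = 2 \<longrightarrow>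
       (\<forall>t w. ln (\<sigma> (Suc t) w) = ln (\<sigma> t w) + W t w)
     \<and> prob_space.indep_vars M (\<lambda>_. borel) W UNIV
     \<and> (\<forall>t. prob_space.expectation M (W t) = 0)
     \<and> (\<forall>t. distr M borel (W t) =
            distr (std_normal_prod (n + 1)) borel
              (\<lambda>x. 1 / (2 * d) *
                 (((min (x 0) (x 1))\<^sup>2 + (\<Sum>j\<in>{2..<n+1}. (x j)\<^sup>2)) / real n - 1))))"
proof -
  interpret csa M n lam d p0 xi
    unfolding csa_def csa_axioms_def using assms(1-7) by auto
  let ?mu = "(E_min_normal_sq lam - 1) / (2 * d * real n)"
  have spos: "\<And>t w. \<sigma> t w > 0" unfolding \<sigma>_def using sigma_rec(1)[OF assms(5)] by blast
  have sS: "\<And>t w. \<sigma> (Suc t) w = \<sigma> t w * exp (Wf t w)" unfolding \<sigma>_def using sigma_rec(2)[OF assms(5)] by blast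
  have Weq: "W t w = Wf t w" for t w
  proof -
    have "W t w = ln (\<sigma> (Suc t) w) - ln (\<sigma> t w)" unfolding W_def \<sigma>_def ..
    also have "\<dots> = Wf t w" using spos[of t w] by (simp add: sS ln_mult)
    finally show ?thesis .
  qed
  have Wfun: "W = Wf" by (auto simp: fun_eq_iff Weq)
  have ratio: "ln (\<sigma> (Suc t) w / \<sigma> t w) = Wf t w" for t w
    using spos[of t w] by (simp add: sS)
  have sumeq: "ln (\<sigma> t w / s0) = (\<Sum>s<t. Wf s w)" for t w
  proof (induction t)
    case 0 then show ?case using assms(5) by (simp add: \<sigma>_def sigma_0)
  next
    case (Suc t)
    have eq: "\<sigma> (Suc t) w / s0 = (\<sigma> t w / s0) * exp (Wf t w)" by (simp add: sS)
    have p: "0 < \<sigma> t w / s0" using spos[of t w] assms(5) by simp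
    have "ln (\<sigma> (Suc t) w / s0) = ln (\<sigma> t w / s0) + Wf t w"
      unfolding eq ln_mult_pos[OF p exp_gt_zero] by simp
    then show ?case using Suc by simp
  qed
  have rec: "\<forall>t w. ln (\<sigma> (Suc t) w) = ln (\<sigma> t w) + W t w"
    by (simp add: W_def \<sigma>_def)
  have EW: "\<And>t. expectation (W t) = ?mu" by (simp add: Wfun Wf_expect)
  have part3: "lam \<ge> 3 \<longrightarrow>
       (AE w in M. (\<lambda>t. ln (\<sigma> t w / s0) / real t) \<longlonglongrightarrow> ?mu)
     \<and> (\<forall>t. expectation (\<lambda>w. ln (\<sigma> (Suc t) w / \<sigma> t w)) = ?mu)
     \<and> ?mu > 0"
  proof
    assume l3: "lam \<ge> 3"
    have "AE w in M. (\<lambda>t. ln (\<sigma> t w / s0) / real t) \<longlonglongrightarrow> ?mu"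
      using slln_Wf by (simp add: sumeq)
    moreover have "\<forall>t. expectation (\<lambda>w. ln (\<sigma> (Suc t) w / \<sigma> t w)) = ?mu"
      using Wf_expect by (simp add: ratio[abs_def])
    moreover have "?mu > 0" using Emin_facts l3 assms(2,4) by (simp add: divide_pos_pos)
    ultimately show "(AE w in M. (\<lambda>t. ln (\<sigma> t w / s0) / real t) \<longlonglongrightarrow> ?mu)
     \<and> (\<forall>t. expectation (\<lambda>w. ln (\<sigma> (Suc t) w / \<sigma> t w)) = ?mu) \<and> ?mu > 0" by blast
  qed
  have E0: "lam \<le> 2 \<Longrightarrow> expectation (W t) = 0" for t
    using Emin_facts EW[of t] by simp
  have lawW: "\<And>t. distr M borel (W t) = distr (PiM KK (\<lambda>_. std_normal_measure)) borel H"
    by (simp add: Wfun Wf_law)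
  have part1: "lam = 1 \<longrightarrow>
       (\<forall>t w. ln (\<sigma> (Suc t) w) = ln (\<sigma> t w) + W t w)
     \<and> indep_vars (\<lambda>_. borel) W UNIV
     \<and> (\<forall>t. expectation (W t) = 0)
     \<and> (\<forall>t. distr M borel (W t) =
            distr (std_normal_prod n) borel
              (\<lambda>x. 1 / (2 * d) * ((\<Sum>j<n. (x j)\<^sup>2) / real n - 1)))"
  proof
    assume l1: "lam = 1"
    have KK1: "KK = {..<n}" unfolding KK_def using l1 by simp
    have H1: "H x = 1 / (2 * d) * ((\<Sum>j<n. (x j)\<^sup>2) / real n - 1)" for x
    proof -
      have "{..<1::nat} = {0}" by auto
      then show ?thesis unfolding H_def using l1 sum_split0[of "\<lambda>j. (x j)\<^sup>2"] by simp
    qed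
    have "\<forall>t. distr M borel (W t) = distr (std_normal_prod n) borel
              (\<lambda>x. 1 / (2 * d) * ((\<Sum>j<n. (x j)\<^sup>2) / real n - 1))"
      unfolding lawW std_normal_prod_def KK1
      by (intro allI distr_cong) (auto simp: H1)
    then show "(\<forall>t w. ln (\<sigma> (Suc t) w) = ln (\<sigma> t w) + W t w)
     \<and> indep_vars (\<lambda>_. borel) W UNIV \<and> (\<forall>t. expectation (W t) = 0)
     \<and> (\<forall>t. distr M borel (W t) = distr (std_normal_prod n) borel
              (\<lambda>x. 1 / (2 * d) * ((\<Sum>j<n. (x j)\<^sup>2) / real n - 1)))"
      using rec Wf_indep E0 l1 by (simp add: Wfun)
  qed
  have part2: "lam = 2 \<longrightarrow>
       (\<forall>t w. ln (\<sigma> (Suc t) w) = ln (\<sigma> t w) + W t w)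
     \<and> indep_vars (\<lambda>_. borel) W UNIV
     \<and> (\<forall>t. expectation (W t) = 0)
     \<and> (\<forall>t. distr M borel (W t) =
            distr (std_normal_prod (n + 1)) borel
              (\<lambda>x. 1 / (2 * d) *
                 (((min (x 0) (x 1))\<^sup>2 + (\<Sum>j\<in>{2..<n+1}. (x j)\<^sup>2)) / real n - 1)))"
  proof
    assume l2: "lam = 2"
    have KK2: "KK = {..<n + 1}" unfolding KK_def using l2 by simp
    have m2: "Min ((\<lambda>k. x k) ` {..<2::nat}) = min (x 0) (x 1)" for x :: "nat \<Rightarrow> real"
    proof -
      have "{..<2::nat} = {0, 1}" by auto
      then show ?thesis by simp
    qed
    have H2: "H x = 1 / (2 * d) * (((min (x 0) (x 1))\<^sup>2 + (\<Sum>j\<in>{2..<n+1}. (x j)\<^sup>2)) / real n - 1)" for x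
    proof -
      have "{lam..<lam + n - 1} = {2..<n+1}" using l2 n1 by auto
      then show ?thesis unfolding H_def using m2[of x] l2 by simp
    qed
    have "\<forall>t. distr M borel (W t) = distr (std_normal_prod (n + 1)) borel
              (\<lambda>x. 1 / (2 * d) * (((min (x 0) (x 1))\<^sup>2 + (\<Sum>j\<in>{2..<n+1}. (x j)\<^sup>2)) / real n - 1))"
      unfolding lawW std_normal_prod_def KK2
      by (intro allI distr_cong) (auto simp: H2)
    then show "(\<forall>t w. ln (\<sigma> (Suc t) w) = ln (\<sigma> t w) + W t w)
     \<and> indep_vars (\<lambda>_. borel) W UNIV \<and> (\<forall>t. expectation (W t) = 0)
     \<and> (\<forall>t. distr M borel (W t) = distr (std_normal_prod (n + 1)) borel
              (\<lambda>x. 1 / (2 * d) * (((min (x 0) (x 1))\<^sup>2 + (\<Sum>j\<in>{2..<n+1}. (x j)\<^sup>2)) / real n - 1)))"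
      using rec Wf_indep E0 l2 by (simp add: Wfun)
  qed
  show ?thesis using part1 part2 part3 by blast
qed


end
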